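(* Every nontrivial totally geodesic subset of $\mathbb{H}^2\times\mathbb{R}$ is either a horizontal plane $\mathbb{H}^2\times\{r\}$ for some $r\in\mathbb{R}$, or a vertical plane $\gamma\times\mathbb{R}$ for some geodesic $\gamma$ of $\mathbb{H}^2$.
   Context: $\mathbb{H}^2\times\mathbb{R}$ carries the Riemannian product metric. A geodesic is the image of a locally isometric immersion of the whole real line. A totally geodesic subset is a nonempty subset $X$ such that any two points of $X$ are joined by a geodesic contained in $X$; it is trivial if it is a single geodesic or the whole space, and nontrivial otherwise. *)

theory Defs
  imports Complex_Main
begin

text \<open>Upper half-plane model of the hyperbolic plane H^2.\<close>
definition H2 :: "complex set" where
  "H2 = {z. Im z > 0}"

definition hdist :: "complex \<Rightarrow> complex \<Rightarrow> real" where
  "hdist z w = arcosh (1 + (cmod (z - w))\<^sup>2 / (2 * Im z * Im w))"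

definition HR :: "(complex \<times> real) set" where
  "HR = H2 \<times> UNIV"

definition pdist :: "complex \<times> real \<Rightarrow> complex \<times> real \<Rightarrow> real" where
  "pdist p q = sqrt ((hdist (fst p) (fst q))\<^sup>2 + (snd p - snd q)\<^sup>2)"

definition local_isometry_line :: "('a \<Rightarrow> 'a \<Rightarrow> real) \<Rightarrow> 'a set \<Rightarrow> (real \<Rightarrow> 'a) \<Rightarrow> bool" where
  "local_isometry_line d S c \<longleftrightarrow> (\<forall>t. c t \<in> S) \<and>
     (\<forall>t. \<exists>e>0. \<forall>s u. \<bar>s - t\<bar> < e \<longrightarrow> \<bar>u - t\<bar> < e \<longrightarrow> d (c s) (c u) = \<bar>s - u\<bar>)"

definition is_geodesic :: "('a \<Rightarrow> 'a \<Rightarrow> real) \<Rightarrow> 'a set \<Rightarrow> 'a set \<Rightarrow> bool" where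
  "is_geodesic d S G \<longleftrightarrow> (\<exists>c. local_isometry_line d S c \<and> G = range c)"

definition totally_geodesic :: "('a \<Rightarrow> 'a \<Rightarrow> real) \<Rightarrow> 'a set \<Rightarrow> 'a set \<Rightarrow> bool" where
  "totally_geodesic d S X \<longleftrightarrow> X \<noteq> {} \<and> X \<subseteq> S \<and>
     (\<forall>p\<in>X. \<forall>q\<in>X. \<exists>G. is_geodesic d S G \<and> G \<subseteq> X \<and> p \<in> G \<and> q \<in> G)"

definition nontrivial_totally_geodesic :: "('a \<Rightarrow> 'a \<Rightarrow> real) \<Rightarrow> 'a set \<Rightarrow> 'a set \<Rightarrow> bool" where
  "nontrivial_totally_geodesic d S X \<longleftrightarrow> totally_geodesic d S X \<and>
     \<not> is_geodesic d S X \<and> X \<noteq> S"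

end

theory Submission
  imports Defs "HOL-Analysis.Analysis"
begin


type_synonym v3 = "real \<times> real \<times> real"

definition B :: "v3 \<Rightarrow> v3 \<Rightarrow> real" where
  "B x y = fst x * fst y - fst (snd x) * fst (snd y) - snd (snd x) * snd (snd y)"

lemma B_simp[simp]: "B (a,b,c) (d,e,f) = a*d - b*e - c*f"
  by (simp add: B_def)

lemma B_sym: "B x y = B y x"
  by (simp add: B_def algebra_simps)

lemma B_add_left: "B (x + y) z = B x z + B y z"
  by (simp add: B_def algebra_simps)
lemma B_add_right: "B z (x + y) = B z x + B z y"
  by (simp add: B_def algebra_simps)
lemma B_diff_left: "B (x - y) z = B x z - B y z"
  by (simp add: B_def algebra_simps)
lemma B_diff_right: "B z (x - y) = B z x - B z y"
  by (simp add: B_def algebra_simps)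
lemma B_scale_left: "B (a *\<^sub>R x) z = a * B x z"
  by (simp add: B_def algebra_simps)
lemma B_scale_right: "B z (a *\<^sub>R x) = a * B z x"
  by (simp add: B_def algebra_simps)
lemma B_minus_left: "B (- x) z = - B x z"
  by (simp add: B_def algebra_simps)
lemma B_minus_right: "B z (- x) = - B z x"
  by (simp add: B_def algebra_simps)
lemma B_zero_left[simp]: "B 0 z = 0" and B_zero_right[simp]: "B z 0 = 0"
  by (simp_all add: B_def zero_prod_def)

lemmas B_lin = B_add_left B_add_right B_diff_left B_diff_right B_scale_left B_scale_right
  B_minus_left B_minus_right

definition Hyp :: "v3 set" where
  "Hyp = {x. B x x = 1 \<and> fst x > 0}"

lemma Hyp_iff: "(a,b,c) \<in> Hyp \<longleftrightarrow> a*a - b*b - c*c = 1 \<and> a > 0"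
  by (simp add: Hyp_def)

lemma rev_CS_aux:
  fixes x0 x1 x2 y0 y1 y2 :: real
  assumes "x0*x0 - x1*x1 - x2*x2 = 1" "x0 > 0" "y0*y0 - y1*y1 - y2*y2 = 1" "y0 > 0"
  shows "x0*y0 - x1*y1 - x2*y2 \<ge> 1 \<and> (x0*y0 - x1*y1 - x2*y2 = 1 \<longrightarrow> x0 = y0 \<and> x1 = y1 \<and> x2 = y2)"
proof -
  define s where "s = x1*y1 + x2*y2"
  have xx: "x0*x0 = 1 + x1*x1 + x2*x2" and yy: "y0*y0 = 1 + y1*y1 + y2*y2" using assms by linarith+
  have e1: "(x0*y0)*(x0*y0) = (1 + x1*x1 + x2*x2) * (1 + y1*y1 + y2*y2)"
  proof -
    have "(x0*y0)*(x0*y0) = (x0*x0)*(y0*y0)" by (simp add: algebra_simps)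
    then show ?thesis using xx yy by simp
  qed
  have e2: "(1 + x1*x1 + x2*x2) * (1 + y1*y1 + y2*y2) - (1+s)*(1+s) = (x1-y1)*(x1-y1) + (x2-y2)*(x2-y2) + (x1*y2-x2*y1)*(x1*y2-x2*y1)"
    unfolding s_def by (simp add: algebra_simps)
  have sq: "(x1-y1)*(x1-y1) \<ge> 0" "(x2-y2)*(x2-y2) \<ge> 0" "(x1*y2-x2*y1)*(x1*y2-x2*y1) \<ge> 0"
    by simp_all
  have ge: "(x0*y0)*(x0*y0) \<ge> (1+s)*(1+s)" using e1 e2 sq by linarith
  have pos: "x0*y0 > 0" using assms by simp
  have g1: "x0*y0 \<ge> 1 + s"
  proof (rule ccontr)
    assume "\<not> ?thesis"
    then have "x0*y0 < 1 + s" by simp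
    then have "(x0*y0)*(x0*y0) < (1+s)*(1+s)" using pos by (intro mult_strict_mono) auto
    then show False using ge by simp
  qed
  moreover have "x0*y0 - x1*y1 - x2*y2 = 1 \<longrightarrow> x0 = y0 \<and> x1 = y1 \<and> x2 = y2"
  proof
    assume h: "x0*y0 - x1*y1 - x2*y2 = 1"
    then have "x0*y0 = 1 + s" unfolding s_def by simp
    then have "(x1-y1)*(x1-y1) + (x2-y2)*(x2-y2) + (x1*y2-x2*y1)*(x1*y2-x2*y1) = 0" using e1 e2 by simp
    then have "(x1-y1)*(x1-y1) = 0" "(x2-y2)*(x2-y2) = 0" using sq by linarith+
    then have a: "x1 = y1" "x2 = y2" by simp_all
    then have "x0*x0 = y0*y0" using xx yy by simp
    then have "(x0 - y0)*(x0 + y0) = 0" by (simp add: algebra_simps)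
    moreover have "x0 + y0 \<noteq> 0" using assms(2,4) by simp
    ultimately have "x0 = y0" by simp
    with a show "x0 = y0 \<and> x1 = y1 \<and> x2 = y2" by simp
  qed
  ultimately show ?thesis unfolding s_def by simp
qed

lemma rev_CS:
  assumes "X \<in> Hyp" "Y \<in> Hyp"
  shows "B X Y \<ge> 1" and "B X Y = 1 \<Longrightarrow> X = Y"
proof -
  obtain x0 x1 x2 where x: "X = (x0,x1,x2)" by (cases X) auto
  obtain y0 y1 y2 where y: "Y = (y0,y1,y2)" by (cases Y) auto
  have "x0*x0 - x1*x1 - x2*x2 = 1" "x0 > 0" "y0*y0 - y1*y1 - y2*y2 = 1" "y0 > 0"
    using assms x y by (auto simp: Hyp_iff)
  note r = rev_CS_aux[OF this]
  show "B X Y \<ge> 1" using r x y by simp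
  show "B X Y = 1 \<Longrightarrow> X = Y" using r x y by simp
qed

lemma same_cone:
  assumes X: "X \<in> Hyp" and Y: "B Y Y = 1" and p: "B X Y > 0"
  shows "Y \<in> Hyp"
proof -
  obtain y0 y1 y2 where y: "Y = (y0,y1,y2)" by (cases Y) auto
  have "y0 > 0"
  proof (rule ccontr)
    assume "\<not> y0 > 0"
    moreover have "y0 \<noteq> 0"
    proof
      assume "y0 = 0"
      then have "B Y Y = - (y1*y1) - y2*y2" using y by simp
      moreover have "y1*y1 \<ge> 0" "y2*y2 \<ge> 0" by simp_all
      ultimately show False using Y by linarith
    qed
    ultimately have "y0 < 0" by simp
    then have "- Y \<in> Hyp" using Y y by (simp add: Hyp_def B_minus_left B_minus_right)
    then have "B X (- Y) \<ge> 1" using rev_CS(1)[OF X] by simp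
    then show False using p by (simp add: B_minus_right)
  qed
  then show ?thesis using Y y by (simp add: Hyp_def)
qed

section \<open>Upper half plane to hyperboloid\<close>

definition Phi :: "complex \<Rightarrow> v3" where
  "Phi z = ((1 + (Re z)^2 + (Im z)^2)/(2*Im z), ((Re z)^2 + (Im z)^2 - 1)/(2*Im z), Re z / Im z)"

definition Phinv :: "v3 \<Rightarrow> complex" where
  "Phinv X = Complex (snd (snd X) / (fst X - fst (snd X))) (1/(fst X - fst (snd X)))"

lemma Phi_B:
  assumes "Im z > 0" "Im w > 0"
  shows "B (Phi z) (Phi w) = 1 + (cmod (z - w))^2/(2*Im z*Im w)"
proof -
  obtain a b where z: "z = Complex a b" by (cases z) auto
  obtain c d where w: "w = Complex c d" by (cases w) auto
  have b: "b > 0" and d: "d > 0" using assms z w by auto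
  have "B (Phi z) (Phi w) = ((1 + a^2 + b^2)*(1 + c^2 + d^2) - (a^2+b^2-1)*(c^2+d^2-1) - 4*a*c) / (4*b*d)"
  proof -
    have "B (Phi z) (Phi w) = (1 + a^2 + b^2)/(2*b) * ((1 + c^2 + d^2)/(2*d)) - (a^2+b^2-1)/(2*b)*((c^2+d^2-1)/(2*d)) - a/b*(c/d)"
      using z w by (simp add: Phi_def)
    also have "\<dots> = ((1 + a^2 + b^2)*(1 + c^2 + d^2) - (a^2+b^2-1)*(c^2+d^2-1) - 4*a*c) / (4*b*d)"
      using b d by (simp add: field_simps)
    finally show ?thesis .
  qed
  also have "\<dots> = 1 + ((a-c)^2 + (b-d)^2)/(2*b*d)"
    using b d by (simp add: field_simps) (simp add: power2_eq_square algebra_simps)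
  also have "\<dots> = 1 + (cmod (z - w))^2/(2*Im z*Im w)"
    using z w by (simp add: cmod_power2)
  finally show ?thesis .
qed

lemma Phi_Hyp: assumes "Im z > 0" shows "Phi z \<in> Hyp"
proof -
  have "fst (Phi z) > 0" using assms by (simp add: Phi_def add_pos_nonneg)
  then show ?thesis unfolding Hyp_def using Phi_B[of z z] assms by simp
qed

lemma Hyp_fst_gt: assumes "X \<in> Hyp" shows "fst X - fst (snd X) > 0"
proof -
  obtain x0 x1 x2 where x: "X = (x0,x1,x2)" by (cases X) auto
  have h: "x0*x0 = 1 + x1*x1 + x2*x2" "x0 > 0" using assms x by (auto simp: Hyp_iff)
  have "x1 < x0"
  proof (rule ccontr)
    assume "\<not> x1 < x0"
    then have "x0 \<le> x1" by simp
    then have "x0*x0 \<le> x1*x1" using h(2) by (intro mult_mono) auto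
    moreover have "x2*x2 \<ge> 0" by simp
    ultimately show False using h(1) by linarith
  qed
  then show ?thesis using x by simp
qed

lemma Phinv_Im: "X \<in> Hyp \<Longrightarrow> Im (Phinv X) > 0"
  using Hyp_fst_gt[of X] by (simp add: Phinv_def)

lemma Phinv_Phi: "Im z > 0 \<Longrightarrow> Phinv (Phi z) = z"
proof -
  assume "Im z > 0"
  obtain a b where z: "z = Complex a b" and b: "b > 0" using \<open>Im z > 0\<close> by (cases z) auto
  have "fst (Phi z) - fst (snd (Phi z)) = 1/b" using b z by (simp add: Phi_def field_simps)
  then show ?thesis using z b by (simp add: Phinv_def Phi_def)
qed

lemma aux1: fixes q x :: real assumes "q \<noteq> 0"
  shows "(1 + (x/q)^2 + (1/q)^2)/(2/q) = (q^2 + x^2 + 1)/(2*q)"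
  using assms by (simp add: field_simps power2_eq_square)

lemma aux2: fixes q x :: real assumes "q \<noteq> 0"
  shows "((x/q)^2 + (1/q)^2 - 1)/(2/q) = (x^2 + 1 - q^2)/(2*q)"
  using assms by (simp add: field_simps power2_eq_square)

lemma Phi_Phinv: assumes "X \<in> Hyp" shows "Phi (Phinv X) = X"
proof -
  obtain x0 x1 x2 where x: "X = (x0,x1,x2)" by (cases X) auto
  have h: "x0*x0 - x1*x1 - x2*x2 = 1" "x0 - x1 > 0" using assms x Hyp_fst_gt[OF assms] by (auto simp: Hyp_iff)
  have "Phi (Phinv X) = ((1 + (x2/(x0-x1))^2 + (1/(x0-x1))^2)/(2/(x0-x1)),
       ((x2/(x0-x1))^2 + (1/(x0-x1))^2 - 1)/(2/(x0-x1)), x2)"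
    using x h by (simp add: Phi_def Phinv_def)
  also have "\<dots> = (x0,x1,x2)"
  proof -
    have n: "x0 - x1 \<noteq> 0" using h by simp
    have a: "(1 + (x2/(x0-x1))^2 + (1/(x0-x1))^2)/(2/(x0-x1)) = ((x0-x1)^2 + x2^2 + 1)/(2*(x0-x1))"
      using aux1[OF n] .
    have a2: "((x0-x1)^2 + x2^2 + 1) = 2*x0*(x0-x1)"
      using h(1) by (simp add: power2_eq_square algebra_simps)
    have b: "((x2/(x0-x1))^2 + (1/(x0-x1))^2 - 1)/(2/(x0-x1)) = (x2^2 + 1 - (x0-x1)^2)/(2*(x0-x1))"
      using aux2[OF n] .
    have b2: "x2^2 + 1 - (x0-x1)^2 = 2*x1*(x0-x1)"
      using h(1) by (simp add: power2_eq_square algebra_simps)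
      have c: "x0 - x1 > 0" using h by simp
    have "(2*x0*(x0-x1))/(2*(x0-x1)) = x0" "(2*x1*(x0-x1))/(2*(x0-x1)) = x1" using c by (auto simp: field_simps)
    then show ?thesis using a a2 b b2 by simp
  qed
  finally show ?thesis using x by simp
qed

definition hD :: "v3 \<Rightarrow> v3 \<Rightarrow> real" where
  "hD X Y = arcosh (B X Y)"

lemma hdist_hd: "Im z > 0 \<Longrightarrow> Im w > 0 \<Longrightarrow> hdist z w = hD (Phi z) (Phi w)"
  by (simp add: hdist_def hD_def Phi_B)

lemma cosh_hd: "X \<in> Hyp \<Longrightarrow> Y \<in> Hyp \<Longrightarrow> cosh (hD X Y) = B X Y"
  using rev_CS(1)[of X Y] by (simp add: hD_def)

lemma hd_nonneg: "X \<in> Hyp \<Longrightarrow> Y \<in> Hyp \<Longrightarrow> hD X Y \<ge> 0"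
  using rev_CS(1)[of X Y] by (simp add: hD_def)

lemma hd_sym: "hD X Y = hD Y X"
  by (simp add: hD_def B_sym)

lemma hd_self: "X \<in> Hyp \<Longrightarrow> hD X X = 0"
  by (simp add: hD_def Hyp_def)

lemma hd_eq_0: "X \<in> Hyp \<Longrightarrow> Y \<in> Hyp \<Longrightarrow> hD X Y = 0 \<longleftrightarrow> X = Y"
  using rev_CS[of X Y] by (auto simp: hD_def Hyp_def)

section \<open>Geodesics of the hyperboloid\<close>

definition gp :: "v3 \<Rightarrow> v3 \<Rightarrow> real \<Rightarrow> v3" where
  "gp X V s = cosh s *\<^sub>R X + sinh s *\<^sub>R V"

definition unitv :: "v3 \<Rightarrow> v3 \<Rightarrow> bool" where
  "unitv X V \<longleftrightarrow> X \<in> Hyp \<and> B X V = 0 \<and> B V V = -1"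

lemma gp_0[simp]: "gp X V 0 = X"
  by (simp add: gp_def)

lemma gp_B:
  assumes "unitv X V"
  shows "B (gp X V s) (gp X V u) = cosh (s - u)"
proof -
  have h: "B X X = 1" "B X V = 0" "B V X = 0" "B V V = -1"
    using assms by (auto simp: unitv_def Hyp_def B_sym)
  show ?thesis by (simp add: gp_def B_lin h cosh_diff algebra_simps)
qed

lemma gp_BX:
  assumes "unitv X V"
  shows "B X (gp X V s) = cosh s"
  using gp_B[OF assms, of 0 s] by simp

lemma gp_Hyp:
  assumes "unitv X V"
  shows "gp X V s \<in> Hyp"
proof -
  have X: "X \<in> Hyp" using assms by (simp add: unitv_def)
  have "B (gp X V s) (gp X V s) = 1" using gp_B[OF assms, of s s] by simp
  moreover have "B X (gp X V s) > 0" using gp_BX[OF assms, of s] by simp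
  ultimately show ?thesis using same_cone[OF X] by blast
qed

lemma gp_hd:
  assumes "unitv X V"
  shows "hD (gp X V s) (gp X V u) = \<bar>s - u\<bar>"
proof -
  have "hD (gp X V s) (gp X V u) = arcosh (cosh \<bar>s - u\<bar>)"
    by (simp add: hD_def gp_B[OF assms] del: cosh_real_abs) (simp only: cosh_real_abs)
  also have "\<dots> = \<bar>s - u\<bar>" by (simp add: arcosh_cosh_real del: cosh_real_abs)
  finally show ?thesis .
qed

lemma gp_inj:
  assumes "unitv X V" "gp X V s = gp X V u"
  shows "s = u"
  using gp_hd[OF assms(1), of s u] assms(2) hd_self[OF gp_Hyp[OF assms(1)]] by simp

definition Lc :: "v3 \<Rightarrow> v3 \<Rightarrow> v3" where
  "Lc a b = (fst (snd a) * snd (snd b) - snd (snd a) * fst (snd b),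
             - (snd (snd a) * fst b - fst a * snd (snd b)),
             - (fst a * fst (snd b) - fst (snd a) * fst b))"

lemma Lag_id: fixes x0 x1 x2 u0 u1 u2 :: real shows
 "(x1 * u2 - x2 * u1) * (x1 * u2 - x2 * u1) -
    (x0 * u2 - x2 * u0) * (x0 * u2 - x2 * u0) -
    (x1 * u0 - x0 * u1) * (x1 * u0 - x0 * u1) =
    (x0 * x0 - x1 * x1 - x2 * x2) * (u0 * u0 - u1 * u1 - u2 * u2) -
    (x0 * u0 - x1 * u1 - x2 * u2) * (x0 * u0 - x1 * u1 - x2 * u2)"
  by (simp add: algebra_simps)

lemma Lc_props:
  assumes "unitv X V"
  shows "B X (Lc X V) = 0" "B V (Lc X V) = 0" "B (Lc X V) (Lc X V) = -1"
proof -
  obtain x0 x1 x2 where x: "X = (x0,x1,x2)" by (cases X) auto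
  obtain u0 u1 u2 where v: "V = (u0,u1,u2)" by (cases V) auto
  have h: "x0*x0 - x1*x1 - x2*x2 = 1" "x0* u0 - x1* u1 - x2* u2 = 0" "u0* u0 - u1* u1 - u2* u2 = -1"
    using assms x v by (auto simp: unitv_def Hyp_def)
  show "B X (Lc X V) = 0" "B V (Lc X V) = 0" using x v by (simp_all add: Lc_def algebra_simps)
  have "B (Lc X V) (Lc X V) = (x0*x0 - x1*x1 - x2*x2) * (u0*u0 - u1*u1 - u2*u2) - (x0*u0 - x1*u1 - x2*u2)*(x0*u0 - x1*u1 - x2*u2)"
    unfolding x v Lc_def by (simp add: Lag_id)
  then show "B (Lc X V) (Lc X V) = -1" using h by simp
qed

lemma frame_decomp:
  assumes "unitv X V"
  shows "Z = B Z X *\<^sub>R X - B Z V *\<^sub>R V - B Z (Lc X V) *\<^sub>R Lc X V"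
proof -
  obtain x0 x1 x2 where x: "X = (x0,x1,x2)" by (cases X) auto
  obtain u0 u1 u2 where v: "V = (u0,u1,u2)" by (cases V) auto
  obtain z0 z1 z2 where z: "Z = (z0,z1,z2)" by (cases Z) auto
  have h: "x0*x0 - x1*x1 - x2*x2 = 1" "x0* u0 - x1* u1 - x2* u2 = 0" "u0* u0 - u1* u1 - u2* u2 = -1"
    using assms x v by (auto simp: unitv_def Hyp_def)
  have "z0 = (z0*x0 - z1*x1 - z2*x2)*x0 - (z0* u0 - z1* u1 - z2* u2)* u0 -
     (z0*(x1* u2 - x2* u1) - z1*(-(x2* u0 - x0* u2)) - z2*(-(x0* u1-x1* u0)))*(x1* u2 - x2* u1)"
    using h by algebra
  moreover have "z1 = (z0*x0 - z1*x1 - z2*x2)*x1 - (z0* u0 - z1* u1 - z2* u2)* u1 -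
     (z0*(x1* u2 - x2* u1) - z1*(-(x2* u0 - x0* u2)) - z2*(-(x0* u1-x1* u0)))*(-(x2* u0 - x0* u2))"
    using h by algebra
  moreover have "z2 = (z0*x0 - z1*x1 - z2*x2)*x2 - (z0* u0 - z1* u1 - z2* u2)* u2 -
     (z0*(x1* u2 - x2* u1) - z1*(-(x2* u0 - x0* u2)) - z2*(-(x0* u1-x1* u0)))*(-(x0* u1-x1* u0))"
    using h by algebra
  ultimately show ?thesis using x v z by (simp add: Lc_def)
qed


definition hdir :: "v3 \<Rightarrow> v3 \<Rightarrow> v3" where
  "hdir X Y = (1 / sinh (hD X Y)) *\<^sub>R (Y - cosh (hD X Y) *\<^sub>R X)"

lemma hD_pos: "X \<in> Hyp \<Longrightarrow> Y \<in> Hyp \<Longrightarrow> X \<noteq> Y \<Longrightarrow> hD X Y > 0"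
  using hd_nonneg[of X Y] hd_eq_0[of X Y] by linarith

lemma hdir_props:
  assumes X: "X \<in> Hyp" and Y: "Y \<in> Hyp" and ne: "X \<noteq> Y"
  shows "unitv X (hdir X Y)" and "gp X (hdir X Y) (hD X Y) = Y"
proof -
  define d where "d = hD X Y"
  have d: "d > 0" using hD_pos[OF X Y ne] d_def by simp
  have sh: "sinh d \<noteq> 0" using d by simp
  have cd: "B X Y = cosh d" using cosh_hd[OF X Y] d_def by simp
  have XX: "B X X = 1" "B Y Y = 1" using X Y by (auto simp: Hyp_def)
  have pyth: "cosh d * cosh d - sinh d * sinh d = 1" using hyperbolic_pythagoras[of d] by (simp add: power2_eq_square)
  have V: "hdir X Y = (1 / sinh d) *\<^sub>R (Y - cosh d *\<^sub>R X)" by (simp add: hdir_def d_def)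
  have "B X (hdir X Y) = (1 / sinh d) * (B X Y - cosh d * B X X)"
    unfolding V by (simp add: B_lin)
  also have "\<dots> = 0" using cd XX by simp
  finally have b1: "B X (hdir X Y) = 0" .
  have "B (hdir X Y) (hdir X Y) = (1 / sinh d) * (1 / sinh d) * (B Y Y - 2 * cosh d * B X Y + cosh d * cosh d * B X X)"
    unfolding V by (simp add: B_lin B_sym[of Y X] algebra_simps)
  also have "\<dots> = (1 / sinh d) * (1 / sinh d) * (1 - cosh d * cosh d)" using cd XX by simp
  also have "\<dots> = -1" using sh pyth by (simp add: field_simps)
  finally have b2: "B (hdir X Y) (hdir X Y) = -1" .
  show "unitv X (hdir X Y)" using X b1 b2 by (simp add: unitv_def)
  have "gp X (hdir X Y) d = cosh d *\<^sub>R X + (sinh d * (1 / sinh d)) *\<^sub>R (Y - cosh d *\<^sub>R X)"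
    by (simp add: gp_def V)
  also have "\<dots> = Y" using sh by simp
  finally show "gp X (hdir X Y) (hD X Y) = Y" by (simp add: d_def)
qed

lemma sq_le_imp_le: fixes x y :: real assumes "x * x \<le> y * y" "y \<ge> 0" shows "x \<le> y"
proof (rule ccontr)
  assume "\<not> x \<le> y"
  then have "y < x" by simp
  then have "y * y < x * x" using assms(2) by (intro mult_strict_mono) auto
  then show False using assms(1) by simp
qed

lemma tri_main:
  assumes X: "X \<in> Hyp" and Y: "Y \<in> Hyp" and Z: "Z \<in> Hyp" and ne: "X \<noteq> Z"
  shows "hD X Z \<le> hD X Y + hD Y Z"
    and "hD X Z = hD X Y + hD Y Z \<Longrightarrow> Y = gp X (hdir X Z) (hD X Y)"
proof -
  define d where "d = hD X Z"
  define V where "V = hdir X Z"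
  define W where "W = Lc X V"
  define a where "a = hD X Y"
  define b where "b = hD Y Z"
  have u: "unitv X V" using hdir_props(1)[OF X Z ne] V_def by simp
  have Zg: "Z = gp X V d" using hdir_props(2)[OF X Z ne] V_def d_def by simp
  have d: "d > 0" using hD_pos[OF X Z ne] d_def by simp
  have a0: "a \<ge> 0" and b0: "b \<ge> 0" using hd_nonneg X Y Z a_def b_def by auto
  define \<alpha> where "\<alpha> = B Y X"
  define \<beta> where "\<beta> = - B Y V"
  define \<gamma> where "\<gamma> = - B Y W"
  have dec: "Y = \<alpha> *\<^sub>R X + \<beta> *\<^sub>R V + \<gamma> *\<^sub>R W"
    using frame_decomp[OF u, of Y] unfolding \<alpha>_def \<beta>_def \<gamma>_def W_def
    by (simp add: algebra_simps)
  have YY: "B Y Y = 1" using Y by (simp add: Hyp_def)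
  have "B Y Y = \<alpha> * B Y X + \<beta> * B Y V + \<gamma> * B Y W"
    by (subst (2) dec) (simp add: B_lin)
  then have sum: "\<alpha>*\<alpha> - \<beta>*\<beta> - \<gamma>*\<gamma> = 1" using YY unfolding \<alpha>_def \<beta>_def \<gamma>_def by simp
  have ca: "\<alpha> = cosh a" using cosh_hd[OF X Y] a_def \<alpha>_def B_sym by simp
  have pa: "cosh a * cosh a - sinh a * sinh a = 1" using hyperbolic_pythagoras[of a] by (simp add: power2_eq_square)
  have sa: "sinh a \<ge> 0" using a0 by simp
  have sum2: "cosh a * cosh a - \<beta>*\<beta> - \<gamma>*\<gamma> = 1" using sum ca by simp
  have "\<beta>*\<beta> \<le> sinh a * sinh a"
  proof -
    have "\<gamma>*\<gamma> \<ge> 0" by simp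
    then show ?thesis using sum2 pa by linarith
  qed
  then have bl: "\<beta> \<le> sinh a" using sq_le_imp_le sa by blast
  have BYZ: "B Y Z = cosh d * \<alpha> - sinh d * \<beta>"
    unfolding Zg gp_def \<alpha>_def \<beta>_def by (simp add: B_lin)
  have cb: "cosh b = B Y Z" using cosh_hd[OF Y Z] b_def by simp
  have sd: "sinh d > 0" using d by simp
  have "sinh d * \<beta> \<le> sinh d * sinh a" using bl sd by (intro mult_left_mono) auto
  moreover have cb2: "cosh b = cosh d * cosh a - sinh d * \<beta>" using cb BYZ ca by simp
  ultimately have "cosh b \<ge> cosh d * cosh a - sinh d * sinh a" by linarith
  also have "cosh d * cosh a - sinh d * sinh a = cosh (d - a)" by (simp add: cosh_diff)
  finally have cge: "cosh \<bar>d - a\<bar> \<le> cosh b" by simp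
  then have "\<bar>d - a\<bar> \<le> b" using cosh_real_nonneg_le_iff[of "\<bar>d - a\<bar>" b] b0 by simp
  then show "hD X Z \<le> hD X Y + hD Y Z" unfolding d_def[symmetric] a_def[symmetric] b_def[symmetric] by linarith
  assume eq: "hD X Z = hD X Y + hD Y Z"
  then have "b = d - a" unfolding d_def a_def b_def by simp
  then have "cosh b = cosh d * cosh a - sinh d * sinh a" by (simp add: cosh_diff)
  then have "sinh d * \<beta> = sinh d * sinh a" using cb2 by linarith
  then have be: "\<beta> = sinh a" using sd by simp
  then have "\<gamma>*\<gamma> = 0" using sum2 pa by simp
  then have "\<gamma> = 0" by simp
  then have "Y = cosh a *\<^sub>R X + sinh a *\<^sub>R V" using dec ca be by simp
  then show "Y = gp X (hdir X Z) (hD X Y)" unfolding gp_def V_def a_def by simp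
qed

lemma tri:
  assumes "X \<in> Hyp" "Y \<in> Hyp" "Z \<in> Hyp"
  shows "hD X Z \<le> hD X Y + hD Y Z"
proof (cases "X = Z")
  case True then show ?thesis using assms hd_self hd_nonneg by (metis add_nonneg_nonneg)
next
  case False then show ?thesis using tri_main(1)[OF assms] by simp
qed


definition HRp :: "(v3 \<times> real) set" where
  "HRp = Hyp \<times> UNIV"

definition pd :: "v3 \<times> real \<Rightarrow> v3 \<times> real \<Rightarrow> real" where
  "pd P Q = sqrt ((hD (fst P) (fst Q))\<^sup>2 + (snd P - snd Q)\<^sup>2)"

lemma pd_self: "P \<in> HRp \<Longrightarrow> pd P P = 0"
  by (auto simp: pd_def HRp_def hd_self)

lemma pd_sym: "pd P Q = pd Q P"
  by (simp add: pd_def hd_sym power2_commute)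

lemma pd_eq_0: assumes "P \<in> HRp" "Q \<in> HRp" shows "pd P Q = 0 \<longleftrightarrow> P = Q"
proof
  assume "pd P Q = 0"
  then have "(hD (fst P) (fst Q))\<^sup>2 + (snd P - snd Q)\<^sup>2 = 0" by (simp add: pd_def)
  then have "hD (fst P) (fst Q) = 0" "snd P - snd Q = 0"
    by (simp_all add: add_nonneg_eq_0_iff)
  then show "P = Q" using assms hd_eq_0 by (auto simp: HRp_def prod_eq_iff)
qed (use assms pd_self in auto)

definition hl :: "v3 \<Rightarrow> v3 \<Rightarrow> real \<Rightarrow> real \<Rightarrow> real \<Rightarrow> real \<Rightarrow> v3 \<times> real" where
  "hl X V a b h t = (gp X V (a * t), b * t + h)"

definition valid :: "v3 \<Rightarrow> v3 \<Rightarrow> real \<Rightarrow> real \<Rightarrow> bool" where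
  "valid X V a b \<longleftrightarrow> X \<in> Hyp \<and> a \<ge> 0 \<and> a\<^sup>2 + b\<^sup>2 = 1 \<and> (a \<noteq> 0 \<longrightarrow> unitv X V)"

definition is_line :: "(real \<Rightarrow> v3 \<times> real) \<Rightarrow> bool" where
  "is_line l \<longleftrightarrow> (\<exists>X V a b h. valid X V a b \<and> l = hl X V a b h)"

lemma valid_gp_Hyp: "valid X V a b \<Longrightarrow> gp X V (a * t) \<in> Hyp"
  by (cases "a = 0") (auto simp: valid_def gp_Hyp)

lemma valid_hD: assumes v: "valid X V a b" shows "hD (gp X V (a * t)) (gp X V (a * u)) = a * \<bar>t - u\<bar>"
proof (cases "a = 0")
  case True then show ?thesis using v by (auto simp: valid_def hd_self)
next
  case False
  then have "hD (gp X V (a * t)) (gp X V (a * u)) = \<bar>a * t - a * u\<bar>"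
    using v by (simp add: valid_def gp_hd)
  also have "\<dots> = a * \<bar>t - u\<bar>" using v by (simp add: valid_def abs_mult right_diff_distrib[symmetric])
  finally show ?thesis .
qed

lemma hl_HR: "valid X V a b \<Longrightarrow> hl X V a b h t \<in> HRp"
  by (simp add: hl_def HRp_def valid_gp_Hyp)

lemma hl_pd: assumes "valid X V a b" shows "pd (hl X V a b h t) (hl X V a b h u) = \<bar>t - u\<bar>"
proof -
  have ab: "a\<^sup>2 + b\<^sup>2 = 1" using assms by (simp add: valid_def)
  have "pd (hl X V a b h t) (hl X V a b h u) = sqrt ((a * \<bar>t - u\<bar>)\<^sup>2 + (b * t - b * u)\<^sup>2)"
    by (simp add: pd_def hl_def valid_hD[OF assms])
  also have "(a * \<bar>t - u\<bar>)\<^sup>2 + (b * t - b * u)\<^sup>2 = (a\<^sup>2 + b\<^sup>2) * (t - u)\<^sup>2"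
    by (simp add: power2_eq_square algebra_simps)
  also have "\<dots> = (t - u)\<^sup>2" using ab by simp
  finally show ?thesis by simp
qed

lemma line_HR: "is_line l \<Longrightarrow> l t \<in> HRp"
  by (auto simp: is_line_def hl_HR)

lemma line_pd: "is_line l \<Longrightarrow> pd (l t) (l u) = \<bar>t - u\<bar>"
  by (auto simp: is_line_def hl_pd)

lemma gp_shift: "gp X V (s + e) = gp (gp X V e) (sinh e *\<^sub>R X + cosh e *\<^sub>R V) s"
  by (simp add: gp_def cosh_add sinh_add algebra_simps)

lemma unit_shift:
  assumes "unitv X V"
  shows "unitv (gp X V e) (sinh e *\<^sub>R X + cosh e *\<^sub>R V)"
proof -
  have h: "B X X = 1" "B X V = 0" "B V X = 0" "B V V = -1"
    using assms by (auto simp: unitv_def Hyp_def B_sym)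
  have p: "cosh e * cosh e - sinh e * sinh e = 1" using hyperbolic_pythagoras[of e] by (simp add: power2_eq_square)
  have "B (gp X V e) (sinh e *\<^sub>R X + cosh e *\<^sub>R V) = 0"
    by (simp add: gp_def B_lin h algebra_simps)
  moreover have "B (sinh e *\<^sub>R X + cosh e *\<^sub>R V) (sinh e *\<^sub>R X + cosh e *\<^sub>R V) = -1"
    using p by (simp add: B_lin h algebra_simps)
  ultimately show ?thesis using gp_Hyp[OF assms] by (simp add: unitv_def)
qed

lemma line_shift:
  assumes "is_line l"
  shows "is_line (\<lambda>t. l (t + c))"
proof -
  obtain X V a b h where v: "valid X V a b" and l: "l = hl X V a b h"
    using assms by (auto simp: is_line_def)
  show ?thesis
  proof (cases "a = 0")
    case True
    have "(\<lambda>t. l (t + c)) = hl X V a b (b * c + h)"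
      using True by (auto simp: l hl_def algebra_simps)
    then show ?thesis using v unfolding is_line_def by blast
  next
    case False
    define X' where "X' = gp X V (a * c)"
    define V' where "V' = sinh (a * c) *\<^sub>R X + cosh (a * c) *\<^sub>R V"
    have u: "unitv X V" using v False by (simp add: valid_def)
    have v': "valid X' V' a b" using v unit_shift[OF u, of "a*c"] gp_Hyp[OF u]
      by (auto simp: valid_def X'_def V'_def)
    have "l (t + c) = hl X' V' a b (b * c + h) t" for t
    proof -
      have g: "gp X V (a*t + a*c) = gp X' V' (a*t)" using gp_shift[of X V "a*t" "a*c"] by (simp add: X'_def V'_def)
      have "l (t + c) = (gp X V (a*t + a*c), b*t + (b*c+h))" by (simp add: l hl_def algebra_simps)
      also have "\<dots> = hl X' V' a b (b * c + h) t" using g by (simp add: hl_def)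
      finally show ?thesis .
    qed
    then have "(\<lambda>t. l (t + c)) = hl X' V' a b (b * c + h)" by auto
    then show ?thesis using v' unfolding is_line_def by blast
  qed
qed

lemma line_reflect:
  assumes "is_line l"
  shows "is_line (\<lambda>t. l (- t))"
proof -
  obtain X V a b h where v: "valid X V a b" and l: "l = hl X V a b h"
    using assms by (auto simp: is_line_def)
  have v': "valid X (- V) a (- b)"
    using v by (auto simp: valid_def unitv_def B_minus_left B_minus_right)
  have "(\<lambda>t. l (- t)) = hl X (- V) a (- b) h"
    by (auto simp: l hl_def gp_def)
  then show ?thesis using v' unfolding is_line_def by blast
qed

lemma line_unique:
  assumes l1: "is_line l1" and l2: "is_line l2" and e: "e \<noteq> 0"
    and e0: "l1 0 = l2 0" and ee: "l1 e = l2 e"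
  shows "l1 = l2"
proof -
  obtain X1 V1 a1 b1 h1 where v1: "valid X1 V1 a1 b1" and l1': "l1 = hl X1 V1 a1 b1 h1"
    using l1 by (auto simp: is_line_def)
  obtain X2 V2 a2 b2 h2 where v2: "valid X2 V2 a2 b2" and l2': "l2 = hl X2 V2 a2 b2 h2"
    using l2 by (auto simp: is_line_def)
  have X: "X1 = X2" and h: "h1 = h2" using e0 by (auto simp: l1' l2' hl_def)
  have "b1 * e = b2 * e" using ee h by (auto simp: l1' l2' hl_def)
  then have b: "b1 = b2" using e by simp
  have "a1\<^sup>2 = 1 - b1\<^sup>2" "a2\<^sup>2 = 1 - b2\<^sup>2" using v1 v2 by (simp_all add: valid_def)
  then have "a1\<^sup>2 = a2\<^sup>2" using b by simp
  moreover have "a1 \<ge> 0" "a2 \<ge> 0" using v1 v2 by (simp_all add: valid_def)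
  ultimately have a: "a1 = a2" by simp
  show ?thesis
  proof (cases "a1 = 0")
    case True
    then show ?thesis using X h b a by (auto simp: l1' l2' hl_def)
  next
    case False
    have g: "gp X1 V1 (a1 * e) = gp X1 V2 (a1 * e)" using ee X a by (auto simp: l1' l2' hl_def)
    then have "sinh (a1 * e) *\<^sub>R V1 = sinh (a1 * e) *\<^sub>R V2" by (simp add: gp_def)
    moreover have "sinh (a1 * e) \<noteq> 0" using False e by simp
    ultimately have "V1 = V2" by simp
    then show ?thesis using X h b a by (auto simp: l1' l2')
  qed
qed


lemma lin5: fixes A D BB s Rr C ab :: real
  assumes "A = D + BB" "A = s + 2*Rr" "C + BB = s + 2*ab" "D \<le> C" "ab \<le> Rr"
  shows "Rr = ab \<and> D = C"
  using assms by linarith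

lemma sqrt_sq_self: fixes a b :: real shows "sqrt (a\<^sup>2 + b\<^sup>2) * sqrt (a\<^sup>2 + b\<^sup>2) = a*a + b*b"
proof -
  have x0: "a\<^sup>2 + b\<^sup>2 \<ge> 0" by simp
  have "sqrt (a\<^sup>2 + b\<^sup>2) * sqrt (a\<^sup>2 + b\<^sup>2) = \<bar>a\<^sup>2 + b\<^sup>2\<bar>" by (rule real_sqrt_mult_self)
  also have "\<dots> = a\<^sup>2 + b\<^sup>2" by (rule abs_of_nonneg[OF x0])
  finally show ?thesis by (simp add: power2_eq_square)
qed

lemma mink_eq:
  fixes a1 a2 b1 b2 \<delta> :: real
  assumes d0: "0 \<le> \<delta>" and dle: "\<delta> \<le> a1 + a2"
    and eq: "sqrt (a1\<^sup>2 + b1\<^sup>2) + sqrt (a2\<^sup>2 + b2\<^sup>2) = sqrt (\<delta>\<^sup>2 + (b1 + b2)\<^sup>2)"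
  shows "\<delta> = a1 + a2" "sqrt (a2\<^sup>2 + b2\<^sup>2) * a1 = sqrt (a1\<^sup>2 + b1\<^sup>2) * a2"
    "sqrt (a2\<^sup>2 + b2\<^sup>2) * b1 = sqrt (a1\<^sup>2 + b1\<^sup>2) * b2"
proof -
  define r1 where "r1 = sqrt (a1\<^sup>2 + b1\<^sup>2)"
  define r2 where "r2 = sqrt (a2\<^sup>2 + b2\<^sup>2)"
  have r1: "r1 \<ge> 0" "r1 * r1 = a1*a1 + b1*b1" unfolding r1_def using sqrt_sq_self by simp_all
  have r2: "r2 \<ge> 0" "r2 * r2 = a2*a2 + b2*b2" unfolding r2_def using sqrt_sq_self by simp_all
  have S: "(r1 + r2) * (r1 + r2) = \<delta>*\<delta> + (b1+b2)*(b1+b2)"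
  proof -
    have "r1 + r2 = sqrt (\<delta>\<^sup>2 + (b1 + b2)\<^sup>2)" using eq r1_def r2_def by simp
    then show ?thesis using sqrt_sq_self[of \<delta> "b1+b2"] by simp
  qed
  have cs_id: "(r1*r2)*(r1*r2) = (a1*a2+b1*b2)*(a1*a2+b1*b2) + (a1*b2-a2*b1)*(a1*b2-a2*b1)"
  proof -
    have "(r1*r2)*(r1*r2) = (r1*r1)*(r2*r2)" by (simp only: ac_simps)
    also have "\<dots> = (a1*a1 + b1*b1)*(a2*a2 + b2*b2)" by (simp only: r1(2) r2(2))
    also have "\<dots> = (a1*a2+b1*b2)*(a1*a2+b1*b2) + (a1*b2-a2*b1)*(a1*b2-a2*b1)" by (simp add: algebra_simps)
    finally show ?thesis .
  qed
  have sqn: "(a1*b2-a2*b1)*(a1*b2-a2*b1) \<ge> 0" by simp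
  have "(a1*a2+b1*b2)*(a1*a2+b1*b2) \<le> (r1*r2)*(r1*r2)" using cs_id sqn by linarith
  moreover have "r1*r2 \<ge> 0" using r1 r2 by simp
  ultimately have cs: "a1*a2+b1*b2 \<le> r1*r2" using sq_le_imp_le by blast
  have dd: "\<delta>*\<delta> \<le> (a1+a2)*(a1+a2)" using d0 dle by (intro mult_mono) auto
  have e0: "(r1 + r2) * (r1 + r2) = r1*r1 + r2*r2 + 2*(r1*r2)" by (simp add: algebra_simps)
  have e1: "(r1 + r2) * (r1 + r2) = a1*a1 + b1*b1 + (a2*a2 + b2*b2) + 2*(r1*r2)"
    using e0 r1(2) r2(2) by linarith
  have e2: "(a1+a2)*(a1+a2) + (b1+b2)*(b1+b2) = a1*a1 + b1*b1 + (a2*a2 + b2*b2) + 2*(a1*a2+b1*b2)"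
    by (simp add: algebra_simps)
  have rr: "r1*r2 = a1*a2+b1*b2" and dd2: "\<delta>*\<delta> = (a1+a2)*(a1+a2)"
    using lin5[OF S e1 e2 dd cs] by auto
  have "\<delta>\<^sup>2 = (a1+a2)\<^sup>2" using dd2 by (simp add: power2_eq_square)
  moreover have "a1 + a2 \<ge> 0" using d0 dle by simp
  ultimately show "\<delta> = a1 + a2" using d0 by simp
  have "(r2*a1 - r1*a2)*(r2*a1 - r1*a2) + (r2*b1 - r1*b2)*(r2*b1 - r1*b2)
        = (r2*r2)*(a1*a1+b1*b1) + (r1*r1)*(a2*a2+b2*b2) - 2*(r1*r2)*(a1*a2+b1*b2)"
    by (simp add: algebra_simps)
  also have "\<dots> = (r2*r2)*(r1*r1) + (r1*r1)*(r2*r2) - 2*(r1*r2)*(r1*r2)"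
    by (simp only: r1(2)[symmetric] r2(2)[symmetric] rr[symmetric])
  also have "\<dots> = 0" by (simp add: algebra_simps)
  finally have z: "(r2*a1 - r1*a2)*(r2*a1 - r1*a2) + (r2*b1 - r1*b2)*(r2*b1 - r1*b2) = 0" .
  have "(r2*a1 - r1*a2)*(r2*a1 - r1*a2) \<ge> 0" "(r2*b1 - r1*b2)*(r2*b1 - r1*b2) \<ge> 0" by simp_all
  then have "(r2*a1 - r1*a2)*(r2*a1 - r1*a2) = 0" "(r2*b1 - r1*b2)*(r2*b1 - r1*b2) = 0" using z by linarith+
  then show "sqrt (a2\<^sup>2 + b2\<^sup>2) * a1 = sqrt (a1\<^sup>2 + b1\<^sup>2) * a2"
    "sqrt (a2\<^sup>2 + b2\<^sup>2) * b1 = sqrt (a1\<^sup>2 + b1\<^sup>2) * b2" unfolding r1_def[symmetric] r2_def[symmetric] by simp_all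
qed

definition lineP :: "v3 \<times> real \<Rightarrow> v3 \<times> real \<Rightarrow> real \<Rightarrow> v3 \<times> real" where
  "lineP P Q = hl (fst P) (hdir (fst P) (fst Q)) (hD (fst P) (fst Q) / pd P Q) ((snd Q - snd P) / pd P Q) (snd P)"

lemma pd_pos: "P \<in> HRp \<Longrightarrow> Q \<in> HRp \<Longrightarrow> P \<noteq> Q \<Longrightarrow> pd P Q > 0"
  using pd_eq_0[of P Q] by (simp add: pd_def order_less_le)

lemma lineP_props0:
  assumes P: "(X,h) \<in> HRp" and Q: "(Y,k) \<in> HRp" and ne: "(X,h) \<noteq> (Y,k)"
  shows "valid X (hdir X Y) (hD X Y / pd (X,h) (Y,k)) ((k - h) / pd (X,h) (Y,k))"
    and "lineP (X,h) (Y,k) (pd (X,h) (Y,k)) = (Y,k)"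
proof -
  have X: "X \<in> Hyp" and Y: "Y \<in> Hyp" using P Q by (auto simp: HRp_def)
  define D where "D = pd (X,h) (Y,k)"
  define \<delta> where "\<delta> = hD X Y"
  have D: "D > 0" using pd_pos[OF P Q ne] D_def by simp
  have d0: "\<delta> \<ge> 0" using hd_nonneg[OF X Y] \<delta>_def by simp
  have x0: "\<delta>\<^sup>2 + (h-k)\<^sup>2 \<ge> 0" by simp
  have Deq: "D = sqrt (\<delta>\<^sup>2 + (h-k)\<^sup>2)" by (simp add: D_def pd_def \<delta>_def)
  have "D * D = \<bar>\<delta>\<^sup>2 + (h-k)\<^sup>2\<bar>" unfolding Deq by (rule real_sqrt_mult_self)
  also have "\<dots> = \<delta>\<^sup>2 + (h-k)\<^sup>2" by (rule abs_of_nonneg[OF x0])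
  finally have DD: "D * D = \<delta>*\<delta> + (k - h)*(k - h)" by (simp add: power2_eq_square algebra_simps)
  have "(\<delta> / D)\<^sup>2 + ((k - h) / D)\<^sup>2 = (\<delta>*\<delta> + (k - h)*(k - h)) / (D * D)"
    by (simp add: power_divide power2_eq_square add_divide_distrib)
  also have "\<dots> = (D * D) / (D * D)" using DD by simp
  also have "\<dots> = 1" using D by simp
  finally have ab: "(\<delta> / D)\<^sup>2 + ((k - h) / D)\<^sup>2 = 1" .
  have un: "\<delta> / D \<noteq> 0 \<longrightarrow> unitv X (hdir X Y)"
  proof
    assume "\<delta> / D \<noteq> 0"
    then have "X \<noteq> Y" using \<delta>_def hd_self[OF X] by auto
    then show "unitv X (hdir X Y)" using hdir_props(1)[OF X Y] by simp
  qed
  show "valid X (hdir X Y) (hD X Y / pd (X,h) (Y,k)) ((k - h) / pd (X,h) (Y,k))"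
    using X d0 D ab un unfolding valid_def D_def \<delta>_def by simp
  have g: "gp X (hdir X Y) \<delta> = Y"
  proof (cases "X = Y")
    case True then show ?thesis using \<delta>_def hd_self[OF X] by simp
  next
    case False then show ?thesis using hdir_props(2)[OF X Y] \<delta>_def by simp
  qed
  have "lineP (X,h) (Y,k) D = (gp X (hdir X Y) (\<delta> / D * D), (k - h) / D * D + h)"
    by (simp add: lineP_def hl_def D_def \<delta>_def)
  also have "\<dots> = (Y, k)" using g D by simp
  finally show "lineP (X,h) (Y,k) (pd (X,h) (Y,k)) = (Y,k)" by (simp add: D_def)
qed

lemma lineP_props:
  assumes P: "P \<in> HRp" and Q: "Q \<in> HRp" and ne: "P \<noteq> Q"
  shows "is_line (lineP P Q)" and "lineP P Q 0 = P" and "lineP P Q (pd P Q) = Q"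
proof -
  obtain X h where p: "P = (X, h)" by (cases P)
  obtain Y k where q: "Q = (Y, k)" by (cases Q)
  note l = lineP_props0[OF P[unfolded p] Q[unfolded q] ne[unfolded p q]]
  show "is_line (lineP P Q)" unfolding is_line_def lineP_def p q fst_conv snd_conv
    by (rule exI)+ (rule conjI[OF l(1) refl])
  show "lineP P Q 0 = P" by (simp add: lineP_def hl_def p)
  show "lineP P Q (pd P Q) = Q" using l(2) p q by simp
qed

lemma pd_eq_case:
  assumes P: "P \<in> HRp" and Q: "Q \<in> HRp" and M: "M \<in> HRp" and ne: "P \<noteq> Q"
    and eq: "pd P M + pd M Q = pd P Q"
  shows "M = lineP P Q (pd P M)"
proof -
  obtain X h where p: "P = (X, h)" by (cases P)
  obtain Y k where q: "Q = (Y, k)" by (cases Q)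
  obtain Z m where mm: "M = (Z, m)" by (cases M)
  have X: "X \<in> Hyp" and Y: "Y \<in> Hyp" and Z: "Z \<in> Hyp" using P Q M p q mm by (auto simp: HRp_def)
  define a1 where "a1 = hD X Z"
  define a2 where "a2 = hD Z Y"
  define \<delta> where "\<delta> = hD X Y"
  define b1 where "b1 = m - h"
  define b2 where "b2 = k - m"
  have a10: "a1 \<ge> 0" and a20: "a2 \<ge> 0" and d0: "\<delta> \<ge> 0" using hd_nonneg X Y Z a1_def a2_def \<delta>_def by auto
  have r1: "pd P M = sqrt (a1\<^sup>2 + b1\<^sup>2)" by (simp add: pd_def p mm a1_def b1_def power2_commute)
  have r2: "pd M Q = sqrt (a2\<^sup>2 + b2\<^sup>2)" by (simp add: pd_def q mm a2_def b2_def power2_commute)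
  have r3: "pd P Q = sqrt (\<delta>\<^sup>2 + (b1 + b2)\<^sup>2)" by (simp add: pd_def p q \<delta>_def b1_def b2_def power2_commute)
  have dle: "\<delta> \<le> a1 + a2" using tri[OF X Z Y] a1_def a2_def \<delta>_def by simp
  have "sqrt (a1\<^sup>2 + b1\<^sup>2) + sqrt (a2\<^sup>2 + b2\<^sup>2) = sqrt (\<delta>\<^sup>2 + (b1 + b2)\<^sup>2)"
    using eq r1 r2 r3 by simp
  note mk0 = mink_eq[OF d0 dle this]
  have mk: "\<delta> = a1 + a2" "pd M Q * a1 = pd P M * a2" "pd M Q * b1 = pd P M * b2"
    using mk0 r1 r2 by simp_all
  define D where "D = pd P Q"
  have D: "D > 0" using pd_pos[OF P Q ne] D_def by simp
  have Dsum: "D = pd P M + pd M Q" using eq D_def by simp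
  have e1: "\<delta> / D * pd P M = a1"
  proof -
    have "\<delta> * pd P M = a1 * D" using mk(1) mk(2) Dsum by (simp add: algebra_simps)
    then show ?thesis using D by (simp add: field_simps)
  qed
  have e2: "(k - h) / D * pd P M = b1"
  proof -
    have "(b1 + b2) * pd P M = b1 * D" using mk(3) Dsum by (simp add: algebra_simps)
    moreover have "k - h = b1 + b2" by (simp add: b1_def b2_def)
    ultimately show ?thesis using D by (simp add: field_simps)
  qed
  have Zg: "Z = gp X (hdir X Y) a1"
  proof (cases "X = Y")
    case True
    then have "\<delta> = 0" using \<delta>_def hd_self[OF X] by simp
    then have "a1 = 0" using mk(1) a10 a20 by simp
    then show ?thesis using hd_eq_0[OF X Z] a1_def by simp
  next
    case False
    then show ?thesis using tri_main(2)[OF X Z Y False] mk(1) a1_def a2_def \<delta>_def by simp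
  qed
  have "lineP P Q (pd P M) = (gp X (hdir X Y) (\<delta> / D * pd P M), (k - h) / D * pd P M + h)"
    by (simp add: lineP_def hl_def p q D_def \<delta>_def)
  also have "\<dots> = M" using Zg e1 e2 by (simp add: mm b1_def)
  finally show ?thesis by simp
qed


lemma loc_line:
  assumes c: "local_isometry_line pd HRp c"
  shows "\<exists>e>0. \<exists>l. is_line l \<and> (\<forall>s. \<bar>s - t\<bar> < e \<longrightarrow> c s = l s)"
proof -
  have cin: "\<And>t. c t \<in> HRp" using c by (simp add: local_isometry_line_def)
  obtain e where e: "e > 0" and iso: "\<And>s u. \<bar>s - t\<bar> < e \<Longrightarrow> \<bar>u - t\<bar> < e \<Longrightarrow> pd (c s) (c u) = \<bar>s - u\<bar>"
    using c unfolding local_isometry_line_def by blast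
  define s0 where "s0 = t - e/2"
  define u0 where "u0 = t + e/2"
  define P where "P = c s0"
  define Q where "Q = c u0"
  have PQ: "pd P Q = e" unfolding P_def Q_def using iso[of s0 u0] e by (simp add: s0_def u0_def)
  have ne: "P \<noteq> Q" using PQ e pd_self[OF cin[of s0]] P_def by auto
  have P: "P \<in> HRp" and Q: "Q \<in> HRp" using cin P_def Q_def by auto
  note lp = lineP_props[OF P Q ne]
  define l where "l = (\<lambda>\<tau>. lineP P Q (\<tau> + (- s0)))"
  have isl: "is_line l" unfolding l_def by (rule line_shift[OF lp(1)])
  have "c s = l s" if s: "\<bar>s - t\<bar> < e/2" for s
  proof -
    have a: "pd P (c s) = s - s0" unfolding P_def using iso[of s0 s] s e by (simp add: s0_def)
    have b: "pd (c s) Q = u0 - s" unfolding Q_def using iso[of s u0] s e by (simp add: u0_def)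
    have "pd P (c s) + pd (c s) Q = pd P Q" using a b PQ by (simp add: s0_def u0_def)
    then have "c s = lineP P Q (pd P (c s))" using pd_eq_case[OF P Q cin ne] by blast
    then show ?thesis using a by (simp add: l_def)
  qed
  then show ?thesis using isl e by (intro exI[of _ "e/2"]) auto
qed

lemma shift_agree:
  assumes l0: "is_line l0" and l1: "is_line l1" and r: "r > 0"
    and ag: "\<And>s. \<bar>s - y\<bar> < r \<Longrightarrow> l0 s = l1 s"
  shows "l0 = l1"
proof -
  define m0 where "m0 = (\<lambda>\<tau>. l0 (\<tau> + y))"
  define m1 where "m1 = (\<lambda>\<tau>. l1 (\<tau> + y))"
  have "is_line m0" "is_line m1" unfolding m0_def m1_def using line_shift l0 l1 by auto
  moreover have "m0 0 = m1 0" "m0 (r/2) = m1 (r/2)" unfolding m0_def m1_def using ag r by auto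
  ultimately have "m0 = m1" using line_unique[of m0 m1 "r/2"] r by auto
  then have "l0 (s - y + y) = l1 (s - y + y)" for s unfolding m0_def m1_def by metis
  then show ?thesis by auto
qed

lemma loc_to_global:
  assumes c: "local_isometry_line pd HRp c"
  shows "\<exists>l. is_line l \<and> c = l"
proof -
  obtain e0 l0 where e0: "e0 > 0" and l0: "is_line l0" and a0: "\<And>s. \<bar>s - 0\<bar> < e0 \<Longrightarrow> c s = l0 s"
    using loc_line[OF c, of 0] by blast
  define S where "S = {t. \<exists>e>0. \<forall>s. \<bar>s - t\<bar> < e \<longrightarrow> c s = l0 s}"
  have 0: "0 \<in> S" unfolding S_def using e0 a0 by auto
  have oS: "open S"
    unfolding open_dist
  proof (intro ballI)
    fix x assume "x \<in> S"
    then obtain e where e: "e > 0" "\<And>s. \<bar>s - x\<bar> < e \<Longrightarrow> c s = l0 s" unfolding S_def by blast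
    show "\<exists>e>0. \<forall>y. dist y x < e \<longrightarrow> y \<in> S"
    proof (intro exI[of _ e] conjI allI impI)
      fix y assume "dist y x < e"
      then have y: "\<bar>y - x\<bar> < e" by (simp add: dist_real_def)
      show "y \<in> S" unfolding S_def
        using y e by (intro CollectI exI[of _ "e - \<bar>y - x\<bar>"]) auto
    qed (use e in auto)
  qed
  have oT: "open (- S)"
    unfolding open_dist
  proof (intro ballI)
    fix x assume xS: "x \<in> - S"
    obtain e1 l1 where e1: "e1 > 0" and l1: "is_line l1" and a1: "\<And>s. \<bar>s - x\<bar> < e1 \<Longrightarrow> c s = l1 s"
      using loc_line[OF c, of x] by blast
    show "\<exists>e>0. \<forall>y. dist y x < e \<longrightarrow> y \<in> - S"
    proof (intro exI[of _ e1] conjI allI impI)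
      fix y assume "dist y x < e1"
      then have y: "\<bar>y - x\<bar> < e1" by (simp add: dist_real_def)
      show "y \<in> - S"
      proof
        assume "y \<in> S"
        then obtain e2 where e2: "e2 > 0" "\<And>s. \<bar>s - y\<bar> < e2 \<Longrightarrow> c s = l0 s" unfolding S_def by blast
        define r where "r = min e2 (e1 - \<bar>y - x\<bar>)"
        have r: "r > 0" using e2 y by (simp add: r_def)
        have "l0 s = l1 s" if "\<bar>s - y\<bar> < r" for s
        proof -
          have "\<bar>s - x\<bar> < e1" using that by (simp add: r_def) linarith
          then have h1: "c s = l1 s" using a1 by blast
          have "\<bar>s - y\<bar> < e2" using that by (simp add: r_def)
          then have "c s = l0 s" using e2(2) by blast
          then show ?thesis using h1 by simp
        qed
        then have "l0 = l1" using shift_agree[OF l0 l1 r] by blast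
        then have "x \<in> S" unfolding S_def using e1 a1 by auto
        then show False using xS by simp
      qed
    qed (use e1 in auto)
  qed
  have "S \<inter> UNIV = {} \<or> - S \<inter> UNIV = {}"
    by (rule connectedD[OF connected_UNIV oS oT]) auto
  then have "S = UNIV" using 0 by auto
  have "c t = l0 t" for t
  proof -
    have "t \<in> S" using \<open>S = UNIV\<close> by simp
    then obtain e where "e > 0" "\<forall>s. \<bar>s - t\<bar> < e \<longrightarrow> c s = l0 s" unfolding S_def by blast
    then show ?thesis by auto
  qed
  then show ?thesis using l0 by blast
qed

lemma geod_is_line:
  assumes "is_geodesic pd HRp G"
  shows "\<exists>l. is_line l \<and> G = range l"
  using assms loc_to_global unfolding is_geodesic_def by blast

lemma line_geod:
  assumes "is_line l"
  shows "is_geodesic pd HRp (range l)"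
  unfolding is_geodesic_def local_isometry_line_def
proof (intro exI[of _ l] conjI allI)
  fix t show "l t \<in> HRp" by (rule line_HR[OF assms])
  show "\<exists>e>0. \<forall>s u. \<bar>s - t\<bar> < e \<longrightarrow> \<bar>u - t\<bar> < e \<longrightarrow> pd (l s) (l u) = \<bar>s - u\<bar>"
    by (intro exI[of _ 1]) (simp add: line_pd[OF assms])
qed simp

lemma range_shift: fixes l :: "real \<Rightarrow> 'a" shows "range (\<lambda>\<tau>. l (\<tau> + c)) = range l"
proof
  show "range l \<subseteq> range (\<lambda>\<tau>. l (\<tau> + c))"
  proof
    fix x assume "x \<in> range l"
    then obtain s where "x = l s" by auto
    then have "x = (\<lambda>\<tau>. l (\<tau> + c)) (s - c)" by simp
    then show "x \<in> range (\<lambda>\<tau>. l (\<tau> + c))" by blast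
  qed
qed auto

lemma range_refl: fixes l :: "real \<Rightarrow> 'a" shows "range (\<lambda>\<tau>. l (- \<tau>)) = range l"
proof
  show "range l \<subseteq> range (\<lambda>\<tau>. l (- \<tau>))"
  proof
    fix x assume "x \<in> range l"
    then obtain s where "x = l s" by auto
    then have "x = (\<lambda>\<tau>. l (- \<tau>)) (- s)" by simp
    then show "x \<in> range (\<lambda>\<tau>. l (- \<tau>))" by blast
  qed
qed auto

definition Lset :: "v3 \<times> real \<Rightarrow> v3 \<times> real \<Rightarrow> (v3 \<times> real) set" where
  "Lset P Q = range (lineP P Q)"

lemma line_through:
  assumes l: "is_line l" and t1: "l t1 = P" and t2: "l t2 = Q" and ne: "P \<noteq> Q"
  shows "range l = Lset P Q"
proof -
  have P: "P \<in> HRp" and Q: "Q \<in> HRp" using line_HR[OF l] t1 t2 by auto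
  have tne: "t1 \<noteq> t2" using t1 t2 ne by auto
  have D: "pd P Q = \<bar>t1 - t2\<bar>" using line_pd[OF l] t1 t2 by auto
  obtain m where m: "is_line m" "m 0 = P" "m (pd P Q) = Q" "range m = range l"
  proof (cases "t1 < t2")
    case True
    define m where "m = (\<lambda>\<tau>. l (\<tau> + t1))"
    have "is_line m" unfolding m_def by (rule line_shift[OF l])
    moreover have "m 0 = P" "m (pd P Q) = Q" using t1 t2 D True by (simp_all add: m_def)
    moreover have "range m = range l" unfolding m_def by (rule range_shift)
    ultimately show ?thesis using that by blast
  next
    case False
    define m where "m = (\<lambda>\<tau>. (\<lambda>\<sigma>. l (\<sigma> + t1)) (- \<tau>))"
    have "is_line m" unfolding m_def by (rule line_reflect[OF line_shift[OF l]])
    moreover have "m 0 = P" "m (pd P Q) = Q" using t1 t2 D False tne by (simp_all add: m_def)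
    moreover have "range m = range l" unfolding m_def
      using range_refl[of "\<lambda>\<sigma>. l (\<sigma> + t1)"] range_shift[of l t1] by simp
    ultimately show ?thesis using that by blast
  qed
  define D where "D = pd P Q"
  have Dp: "D > 0" using pd_pos[OF P Q ne] D_def by simp
  define M where "M = m (D/2)"
  have M: "M \<in> HRp" using line_HR[OF m(1)] M_def by simp
  have pM: "pd P M = D/2" using line_pd[OF m(1), of 0 "D/2"] m(2) Dp by (simp add: M_def)
  have pMQ: "pd M Q = D/2" using line_pd[OF m(1), of "D/2" D] m(3) Dp by (simp add: M_def D_def)
  have "M = lineP P Q (pd P M)" by (rule pd_eq_case[OF P Q M ne]) (use pM pMQ D_def in simp)
  then have "M = lineP P Q (D/2)" using pM by simp
  then have "m = lineP P Q" using line_unique[OF m(1) lineP_props(1)[OF P Q ne], of "D/2"] Dp m(2)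
      lineP_props(2)[OF P Q ne] M_def by simp
  then show ?thesis using m(4) by (simp add: Lset_def)
qed

lemma Lset_props:
  assumes P: "P \<in> HRp" and Q: "Q \<in> HRp" and ne: "P \<noteq> Q"
  shows "P \<in> Lset P Q" "Q \<in> Lset P Q" "is_geodesic pd HRp (Lset P Q)" "Lset P Q \<subseteq> HRp"
proof -
  note lp = lineP_props[OF P Q ne]
  show "P \<in> Lset P Q" using lp(2) unfolding Lset_def by (metis rangeI)
  show "Q \<in> Lset P Q" using lp(3) unfolding Lset_def by (metis rangeI)
  show "is_geodesic pd HRp (Lset P Q)" unfolding Lset_def by (rule line_geod[OF lp(1)])
  show "Lset P Q \<subseteq> HRp" unfolding Lset_def using line_HR[OF lp(1)] by auto
qed

lemma geod_two_points:
  assumes G: "is_geodesic pd HRp G" and P: "P \<in> G" and Q: "Q \<in> G" and ne: "P \<noteq> Q"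
  shows "G = Lset P Q"
proof -
  obtain l where l: "is_line l" "G = range l" using geod_is_line[OF G] by blast
  obtain t1 t2 where "l t1 = P" "l t2 = Q" using P Q l(2) by auto
  then show ?thesis using line_through[OF l(1) _ _ ne] l(2) by simp
qed

lemma TG_line:
  assumes X: "totally_geodesic pd HRp X" and P: "P \<in> X" and Q: "Q \<in> X" and ne: "P \<noteq> Q"
  shows "Lset P Q \<subseteq> X"
proof -
  obtain G where G: "is_geodesic pd HRp G" "G \<subseteq> X" "P \<in> G" "Q \<in> G"
    using X P Q unfolding totally_geodesic_def by blast
  then show ?thesis using geod_two_points[OF G(1) G(3) G(4) ne] by simp
qed


definition Hline :: "v3 \<Rightarrow> v3 \<Rightarrow> v3 set" where
  "Hline P Q = range (gp P (hdir P Q))"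

definition Hn :: "v3 \<Rightarrow> v3 \<Rightarrow> v3" where
  "Hn P Q = Lc P (hdir P Q)"

lemma gp_neg: "gp X V (- s) = gp X (- V) s"
  by (simp add: gp_def)

lemma unit_neg: "unitv X V \<Longrightarrow> unitv X (- V)"
  by (simp add: unitv_def B_minus_left B_minus_right)

lemma flat_line:
  assumes u: "unitv X V" and ab: "\<alpha>\<^sup>2 + \<beta>\<^sup>2 = 1"
  shows "is_line (\<lambda>t. (gp X V (\<sigma> + \<alpha> * t), \<tau> + \<beta> * t))"
proof -
  define X' where "X' = gp X V \<sigma>"
  define V1 where "V1 = sinh \<sigma> *\<^sub>R X + cosh \<sigma> *\<^sub>R V"
  have u1: "unitv X' V1" using unit_shift[OF u] X'_def V1_def by simp
  have X': "X' \<in> Hyp" using u1 by (simp add: unitv_def)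
  have g: "gp X V (\<sigma> + \<alpha> * t) = gp X' V1 (\<alpha> * t)" for t
    using gp_shift[of X V "\<alpha> * t" \<sigma>] by (simp add: X'_def V1_def add.commute)
  show ?thesis
  proof (cases "\<alpha> \<ge> 0")
    case True
    have "valid X' V1 \<alpha> \<beta>" using True ab u1 X' by (simp add: valid_def)
    moreover have "(\<lambda>t. (gp X V (\<sigma> + \<alpha> * t), \<tau> + \<beta> * t)) = hl X' V1 \<alpha> \<beta> \<tau>"
      by (rule ext) (simp add: hl_def g add.commute)
    ultimately show ?thesis unfolding is_line_def by blast
  next
    case False
    have "valid X' (- V1) (- \<alpha>) \<beta>" using False ab unit_neg[OF u1] X' by (simp add: valid_def)
    moreover have "(\<lambda>t. (gp X V (\<sigma> + \<alpha> * t), \<tau> + \<beta> * t)) = hl X' (- V1) (- \<alpha>) \<beta> \<tau>"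
    proof (rule ext)
      fix t
      have "gp X' V1 (\<alpha> * t) = gp X' (- V1) (- \<alpha> * t)" using gp_neg[of X' V1 "- \<alpha> * t"] by simp
      then show "(gp X V (\<sigma> + \<alpha> * t), \<tau> + \<beta> * t) = hl X' (- V1) (- \<alpha>) \<beta> \<tau> t"
        by (simp add: hl_def g add.commute)
    qed
    ultimately show ?thesis unfolding is_line_def by blast
  qed
qed

definition Eline :: "real \<times> real \<Rightarrow> real \<times> real \<Rightarrow> (real \<times> real) set" where
  "Eline Pa Pb = {(fst Pa + t * (fst Pb - fst Pa), snd Pa + t * (snd Pb - snd Pa)) | t. True}"

lemma Eline_iff: "(x, y) \<in> Eline (a1, a2) (b1, b2) \<longleftrightarrow> (\<exists>t. x = a1 + t * (b1 - a1) \<and> y = a2 + t * (b2 - a2))"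
  by (auto simp: Eline_def)

definition Fl :: "v3 \<Rightarrow> v3 \<Rightarrow> real \<times> real \<Rightarrow> v3 \<times> real" where
  "Fl X V p = (gp X V (fst p), snd p)"

lemma Fl_inj: assumes u: "unitv X V" and e: "Fl X V Pa = Fl X V Pb" shows "Pa = Pb"
proof -
  have g: "gp X V (fst Pa) = gp X V (fst Pb)" and sn: "snd Pa = snd Pb" using e unfolding Fl_def by auto
  have "fst Pa = fst Pb" by (rule gp_inj[OF u g])
  then show ?thesis using sn by (simp add: prod_eq_iff)
qed

lemma flat_Lset:
  assumes u: "unitv X V" and ne: "Pa \<noteq> Pb"
  shows "Lset (Fl X V Pa) (Fl X V Pb) = Fl X V ` Eline Pa Pb"
proof -
  obtain a1 a2 where Pa: "Pa = (a1, a2)" by (cases Pa)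
  obtain b1 b2 where Bq: "Pb = (b1, b2)" by (cases Pb)
  define L where "L = sqrt ((b1 - a1)\<^sup>2 + (b2 - a2)\<^sup>2)"
  have Lsq: "L * L = (b1 - a1)\<^sup>2 + (b2 - a2)\<^sup>2" unfolding L_def by (simp add: sqrt_sq_self power2_eq_square)
  have "b1 - a1 \<noteq> 0 \<or> b2 - a2 \<noteq> 0" using ne Pa Bq by auto
  then have Lnz: "(b1 - a1)\<^sup>2 + (b2 - a2)\<^sup>2 > 0" by (simp only: sum_power2_gt_zero_iff)
  then have L: "L > 0" unfolding L_def by simp
  define \<alpha> where "\<alpha> = (b1 - a1) / L"
  define \<beta> where "\<beta> = (b2 - a2) / L"
  have ab: "\<alpha>\<^sup>2 + \<beta>\<^sup>2 = 1"
  proof -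
    have "\<alpha>\<^sup>2 + \<beta>\<^sup>2 = ((b1 - a1)\<^sup>2 + (b2 - a2)\<^sup>2) / (L * L)"
      by (simp add: \<alpha>_def \<beta>_def power_divide add_divide_distrib power2_eq_square)
    also have "\<dots> = (L * L) / (L * L)" using Lsq by simp
    also have "\<dots> = 1" using L by simp
    finally show ?thesis .
  qed
  define l where "l = (\<lambda>t. (gp X V (a1 + \<alpha> * t), a2 + \<beta> * t))"
  have isl: "is_line l" unfolding l_def by (rule flat_line[OF u ab])
  have l0: "l 0 = Fl X V Pa" by (simp add: l_def Fl_def Pa)
  have lL: "l L = Fl X V Pb" using L by (simp add: l_def Fl_def Bq \<alpha>_def \<beta>_def)
  have FAB: "Fl X V Pa \<noteq> Fl X V Pb" using Fl_inj[OF u] ne by blast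
  have "range l = Lset (Fl X V Pa) (Fl X V Pb)" using line_through[OF isl l0 lL FAB] .
  moreover have "range l = Fl X V ` Eline Pa Pb"
  proof
    show "range l \<subseteq> Fl X V ` Eline Pa Pb"
    proof
      fix z assume "z \<in> range l"
      then obtain t where z: "z = l t" by auto
      have "(a1 + (t / L) * (b1 - a1), a2 + (t / L) * (b2 - a2)) \<in> Eline Pa Pb"
        unfolding Pa Bq Eline_iff by blast
      moreover have "z = Fl X V (a1 + (t / L) * (b1 - a1), a2 + (t / L) * (b2 - a2))"
        by (simp add: z l_def Fl_def \<alpha>_def \<beta>_def ac_simps)
      ultimately show "z \<in> Fl X V ` Eline Pa Pb" by blast
    qed
    show "Fl X V ` Eline Pa Pb \<subseteq> range l"
    proof
      fix z assume "z \<in> Fl X V ` Eline Pa Pb"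
      then obtain t where z: "z = Fl X V (a1 + t * (b1 - a1), a2 + t * (b2 - a2))"
        unfolding Pa Bq Eline_def by auto
      have "z = l (t * L)" using L by (simp add: z l_def Fl_def \<alpha>_def \<beta>_def ac_simps)
      then show "z \<in> range l" by simp
    qed
  qed
  ultimately show ?thesis by simp
qed

lemma flat_closed:
  assumes TG: "totally_geodesic pd HRp X'" and u: "unitv X V"
    and Pa: "Fl X V Pa \<in> X'" and Pb: "Fl X V Pb \<in> X'" and ne: "Pa \<noteq> Pb"
  shows "Fl X V ` Eline Pa Pb \<subseteq> X'"
  using TG_line[OF TG Pa Pb] Fl_inj[OF u] ne flat_Lset[OF u ne] by metis

lemma R2_closure:
  fixes E :: "(real \<times> real) set"
  assumes cl: "\<And>P Q. P \<in> E \<Longrightarrow> Q \<in> E \<Longrightarrow> P \<noteq> Q \<Longrightarrow> Eline P Q \<subseteq> E"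
    and Pa: "Pa \<in> E" and Pb: "Pb \<in> E" and Pc: "Pc \<in> E" and ne: "Pa \<noteq> Pb" and nc: "Pc \<notin> Eline Pa Pb"
  shows "E = UNIV"
proof -
  obtain a1 a2 where Aq: "Pa = (a1, a2)" by (cases Pa)
  obtain b1 b2 where Bq: "Pb = (b1, b2)" by (cases Pb)
  obtain c1 c2 where Cq: "Pc = (c1, c2)" by (cases Pc)
  define u1 where "u1 = b1 - a1"
  define u2 where "u2 = b2 - a2"
  define w1 where "w1 = c1 - a1"
  define w2 where "w2 = c2 - a2"
  define det where "det = u1 * w2 - u2 * w1"
  have u: "u1 \<noteq> 0 \<or> u2 \<noteq> 0" using ne Aq Bq u1_def u2_def by auto
  have det: "det \<noteq> 0"
  proof
    assume d0: "det = 0"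
    show False
    proof (cases "u1 = 0")
      case False
      define t where "t = w1 / u1"
      have "c1 = a1 + t * (b1 - a1)" using False by (simp add: t_def w1_def u1_def)
      moreover have "c2 = a2 + t * (b2 - a2)"
      proof -
        have "u1 * w2 = u2 * w1" using d0 det_def by simp
        then have "w2 = u2 * w1 / u1" using False by (simp add: field_simps)
        then have "t * (b2 - a2) = w2" using False by (simp add: t_def u2_def field_simps)
        then show ?thesis by (simp add: w2_def)
      qed
      ultimately show False using nc Aq Bq Cq Eline_iff by blast
    next
      case True
      then have u2: "u2 \<noteq> 0" using u by simp
      define t where "t = w2 / u2"
      have "- (u2 * w1) = 0" using d0 True det_def by simp
      then have "w1 = 0" using u2 by simp
      then have "c1 = a1 + t * (b1 - a1)" using True by (simp add: w1_def u1_def)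
      moreover have "c2 = a2 + t * (b2 - a2)" using u2 by (simp add: t_def w2_def u2_def)
      ultimately show False using nc Aq Bq Cq Eline_iff by blast
    qed
  qed
  have AC: "Pa \<noteq> Pc"
  proof
    assume "Pa = Pc"
    have "(a1, a2) \<in> Eline (a1,a2) (b1,b2)" unfolding Eline_iff by (rule exI[of _ 0]) simp
    then have "Pc \<in> Eline Pa Pb" using \<open>Pa = Pc\<close> Aq Bq by simp
    then show False using nc by simp
  qed
  have LAB: "Eline Pa Pb \<subseteq> E" using cl[OF Pa Pb ne] .
  have LAC: "Eline Pa Pc \<subseteq> E" using cl[OF Pa Pc AC] .
  show ?thesis
  proof (rule set_eqI, rule iffI)
    fix P :: "real \<times> real" assume "P \<in> UNIV"
    obtain x y where Pq: "P = (x, y)" by (cases P)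
    define d1 where "d1 = x - a1"
    define d2 where "d2 = y - a2"
    define p where "p = (d1 * w2 - d2 * w1) / det"
    define q where "q = (u1 * d2 - u2 * d1) / det"
    have ex: "x = a1 + p * u1 + q * w1"
    proof -
      have "p * u1 + q * w1 = ((d1 * w2 - d2 * w1) * u1 + (u1 * d2 - u2 * d1) * w1) / det"
        by (simp add: p_def q_def add_divide_distrib)
      also have "(d1 * w2 - d2 * w1) * u1 + (u1 * d2 - u2 * d1) * w1 = d1 * det"
        by (simp add: det_def algebra_simps)
      finally show ?thesis using det by (simp add: d1_def)
    qed
    have ey: "y = a2 + p * u2 + q * w2"
    proof -
      have "p * u2 + q * w2 = ((d1 * w2 - d2 * w1) * u2 + (u1 * d2 - u2 * d1) * w2) / det"
        by (simp add: p_def q_def add_divide_distrib)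
      also have "(d1 * w2 - d2 * w1) * u2 + (u1 * d2 - u2 * d1) * w2 = d2 * det"
        by (simp add: det_def algebra_simps)
      finally show ?thesis using det by (simp add: d2_def)
    qed
    show "P \<in> E"
    proof (cases "q = 0")
      case True
      then have "P \<in> Eline Pa Pb" unfolding Pq Aq Bq Eline_iff using ex ey
        by (intro exI[of _ p]) (simp add: u1_def u2_def)
      then show ?thesis using LAB by auto
    next
      case qn: False
      show ?thesis
      proof (cases "p = 0")
        case True
        then have "P \<in> Eline Pa Pc" unfolding Pq Aq Cq Eline_iff using ex ey
          by (intro exI[of _ q]) (simp add: w1_def w2_def)
        then show ?thesis using LAC by auto
      next
        case pn: False
        define D1 where "D1 = (a1 + 2 * p * u1, a2 + 2 * p * u2)"
        define D2 where "D2 = (a1 + 2 * q * w1, a2 + 2 * q * w2)"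
        have D1: "D1 \<in> E" using LAB unfolding D1_def
          by (rule subsetD) (unfold Aq Bq Eline_iff, intro exI[of _ "2 * p"], simp add: u1_def u2_def)
        have D2: "D2 \<in> E" using LAC unfolding D2_def
          by (rule subsetD) (unfold Aq Cq Eline_iff, intro exI[of _ "2 * q"], simp add: w1_def w2_def)
        have D12: "D1 \<noteq> D2"
        proof
          assume "D1 = D2"
          then have e1: "p * u1 = q * w1" and e2: "p * u2 = q * w2" by (simp_all add: D1_def D2_def)
          have "p * det = (p * u1) * w2 - (p * u2) * w1" by (simp add: det_def algebra_simps)
          also have "\<dots> = 0" using e1 e2 by (simp add: algebra_simps)
          finally show False using pn det by simp
        qed
        have "P \<in> Eline D1 D2" unfolding Pq D1_def D2_def Eline_iff using ex ey
          by (intro exI[of _ "1/2"]) (simp add: algebra_simps)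
        then show ?thesis using cl[OF D1 D2 D12] by auto
      qed
    qed
  qed simp
qed

lemma vert_Lset:
  assumes X: "X \<in> Hyp" and hk: "h \<noteq> k"
  shows "Lset (X, h) (X, k) = {X} \<times> UNIV"
proof -
  define l where "l = (\<lambda>t. (X, t + h))"
  have "valid X X 0 1" using X by (simp add: valid_def)
  moreover have "l = hl X X 0 1 h" by (rule ext) (simp add: l_def hl_def)
  ultimately have isl: "is_line l" unfolding is_line_def by blast
  have "range l = Lset (X, h) (X, k)"
    by (rule line_through[OF isl, of 0 _ "k - h"]) (use hk in \<open>auto simp: l_def\<close>)
  moreover have "range l = {X} \<times> UNIV"
  proof
    show "{X} \<times> UNIV \<subseteq> range l"
    proof
      fix z assume "z \<in> {X} \<times> (UNIV :: real set)"
      then obtain y where "z = (X, y)" by auto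
      then have "z = l (y - h)" by (simp add: l_def)
      then show "z \<in> range l" by simp
    qed
  qed (auto simp: l_def)
  ultimately show ?thesis by simp
qed

lemma hdir_gp:
  assumes u: "unitv X V" and s: "s > 0"
  shows "hdir X (gp X V s) = V"
proof -
  have "hD X (gp X V s) = s" using gp_hd[OF u, of 0 s] s by simp
  then show ?thesis using s by (simp add: hdir_def gp_def)
qed

lemma Hline_props:
  assumes P: "P \<in> Hyp" and Q: "Q \<in> Hyp" and ne: "P \<noteq> Q"
  shows "P \<in> Hline P Q" "Q \<in> Hline P Q" "Hline P Q \<subseteq> Hyp" "unitv P (hdir P Q)"
proof -
  have u: "unitv P (hdir P Q)" using hdir_props(1)[OF P Q ne] .
  show "unitv P (hdir P Q)" by (rule u)
  show "P \<in> Hline P Q" unfolding Hline_def by (metis gp_0 rangeI)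
  show "Q \<in> Hline P Q" unfolding Hline_def by (metis hdir_props(2)[OF P Q ne] rangeI)
  show "Hline P Q \<subseteq> Hyp" unfolding Hline_def using gp_Hyp[OF u] by auto
qed

lemma horiz_Lset:
  assumes P: "P \<in> Hyp" and Q: "Q \<in> Hyp" and ne: "P \<noteq> Q"
  shows "Lset (P, r) (Q, r) = Hline P Q \<times> {r}"
proof -
  have u: "unitv P (hdir P Q)" using hdir_props(1)[OF P Q ne] .
  define l where "l = (\<lambda>t. (gp P (hdir P Q) (0 + 1 * t), r + 0 * t))"
  have isl: "is_line l" unfolding l_def by (rule flat_line[OF u]) simp
  have "range l = Lset (P, r) (Q, r)"
    by (rule line_through[OF isl, of 0 _ "hD P Q"]) (use ne hdir_props(2)[OF P Q ne] in \<open>auto simp: l_def\<close>)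
  moreover have "range l = Hline P Q \<times> {r}" by (auto simp: l_def Hline_def)
  ultimately show ?thesis by simp
qed

lemma Hline_unique:
  assumes u: "unitv X V" and ne: "gp X V s1 \<noteq> gp X V s2"
  shows "range (gp X V) = Hline (gp X V s1) (gp X V s2)"
proof -
  define l where "l = (\<lambda>t. (gp X V (0 + 1 * t), 0 + 0 * t))"
  have isl: "is_line l" unfolding l_def by (rule flat_line[OF u]) simp
  have P: "gp X V s1 \<in> Hyp" and Q: "gp X V s2 \<in> Hyp" using gp_Hyp[OF u] by auto
  have "range l = Lset (gp X V s1, 0) (gp X V s2, 0)"
    by (rule line_through[OF isl, of s1 _ s2]) (use ne in \<open>auto simp: l_def\<close>)
  also have "\<dots> = Hline (gp X V s1) (gp X V s2) \<times> {0}" by (rule horiz_Lset[OF P Q ne])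
  finally have e: "range l = Hline (gp X V s1) (gp X V s2) \<times> {0}" .
  have "range (gp X V) = fst ` range l" by (auto simp: l_def image_iff)
  also have "\<dots> = Hline (gp X V s1) (gp X V s2)" using e by force
  finally show ?thesis .
qed

lemma Hline_two_points:
  assumes P: "P \<in> Hyp" and Q: "Q \<in> Hyp" and ne: "P \<noteq> Q"
    and Z1: "Z1 \<in> Hline P Q" and Z2: "Z2 \<in> Hline P Q" and ne2: "Z1 \<noteq> Z2"
  shows "Hline Z1 Z2 = Hline P Q"
proof -
  have u: "unitv P (hdir P Q)" using hdir_props(1)[OF P Q ne] .
  obtain s1 s2 where "Z1 = gp P (hdir P Q) s1" "Z2 = gp P (hdir P Q) s2" using Z1 Z2 by (auto simp: Hline_def)
  then show ?thesis using Hline_unique[OF u, of s1 s2] ne2 by (simp add: Hline_def)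
qed

lemma Hline_sym:
  assumes P: "P \<in> Hyp" and Q: "Q \<in> Hyp" and ne: "P \<noteq> Q"
  shows "Hline Q P = Hline P Q"
  using Hline_two_points[OF P Q ne] Hline_props[OF P Q ne] ne by metis

lemma fst_Lset:
  assumes W1: "W1 \<in> Hyp" and W2: "W2 \<in> Hyp" and ne: "W1 \<noteq> W2"
  shows "fst ` Lset (W1, a) (W2, b) = Hline W1 W2"
proof -
  have P: "(W1, a) \<in> HRp" and Q: "(W2, b) \<in> HRp" using W1 W2 by (auto simp: HRp_def)
  have ne': "(W1, a) \<noteq> (W2, b)" using ne by simp
  define D where "D = pd (W1, a) (W2, b)"
  have D: "D > 0" using pd_pos[OF P Q ne'] D_def by simp
  define A where "A = hD W1 W2 / D"
  have A: "A > 0" using hD_pos[OF W1 W2 ne] D by (simp add: A_def)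
  have "fst (lineP (W1, a) (W2, b) t) = gp W1 (hdir W1 W2) (A * t)" for t
    by (simp add: lineP_def hl_def A_def D_def)
  then have "fst ` Lset (W1, a) (W2, b) = range (\<lambda>t. gp W1 (hdir W1 W2) (A * t))"
    unfolding Lset_def by (simp add: image_image)
  also have "\<dots> = range (gp W1 (hdir W1 W2))"
  proof
    show "range (gp W1 (hdir W1 W2)) \<subseteq> range (\<lambda>t. gp W1 (hdir W1 W2) (A * t))"
    proof
      fix z assume "z \<in> range (gp W1 (hdir W1 W2))"
      then obtain s where "z = gp W1 (hdir W1 W2) s" by auto
      then have "z = (\<lambda>t. gp W1 (hdir W1 W2) (A * t)) (s / A)" using A by simp
      then show "z \<in> range (\<lambda>t. gp W1 (hdir W1 W2) (A * t))" by blast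
    qed
  qed auto
  finally show ?thesis by (simp add: Hline_def)
qed

lemma Hline_char:
  assumes P: "P \<in> Hyp" and Q: "Q \<in> Hyp" and ne: "P \<noteq> Q"
  shows "Hline P Q = {Z \<in> Hyp. B Z (Hn P Q) = 0}"
proof -
  define V where "V = hdir P Q"
  have u: "unitv P V" using hdir_props(1)[OF P Q ne] V_def by simp
  have hP: "B P P = 1" "B V V = -1" "B P V = 0" "B V P = 0" using u by (auto simp: unitv_def Hyp_def B_sym)
  note lc = Lc_props[OF u]
  show ?thesis
  proof
    show "Hline P Q \<subseteq> {Z \<in> Hyp. B Z (Hn P Q) = 0}"
      using gp_Hyp[OF u] lc by (auto simp: Hline_def Hn_def V_def[symmetric] gp_def B_lin)
    show "{Z \<in> Hyp. B Z (Hn P Q) = 0} \<subseteq> Hline P Q"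
    proof
      fix Z assume "Z \<in> {Z \<in> Hyp. B Z (Hn P Q) = 0}"
      then have Z: "Z \<in> Hyp" and z0: "B Z (Lc P V) = 0" by (auto simp: Hn_def V_def)
      define \<alpha> where "\<alpha> = B Z P"
      define \<beta> where "\<beta> = - B Z V"
      have dec: "Z = \<alpha> *\<^sub>R P + \<beta> *\<^sub>R V" using frame_decomp[OF u, of Z] z0
        by (simp add: \<alpha>_def \<beta>_def)
      have "B Z Z = \<alpha> * B Z P + \<beta> * B Z V" by (subst (2) dec) (simp add: B_lin)
      then have ab: "\<alpha> * \<alpha> - \<beta> * \<beta> = 1" using Z by (simp add: Hyp_def \<alpha>_def \<beta>_def)
      have a1: "\<alpha> \<ge> 1" using rev_CS(1)[OF Z P] \<alpha>_def by simp
      define s where "s = arsinh \<beta>"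
      have sh: "sinh s = \<beta>" by (simp add: s_def)
      have "\<beta>\<^sup>2 + 1 = \<alpha>\<^sup>2" using ab by (simp add: power2_eq_square)
      have "cosh s = sqrt (\<beta>\<^sup>2 + 1)" by (simp add: s_def cosh_arsinh_real)
      also have "\<dots> = sqrt (\<alpha>\<^sup>2)" using \<open>\<beta>\<^sup>2 + 1 = \<alpha>\<^sup>2\<close> by simp
      also have "\<dots> = \<alpha>" using a1 by simp
      finally have ch: "cosh s = \<alpha>" .
      have "Z = gp P V s" using dec ch sh by (simp add: gp_def)
      then show "Z \<in> Hline P Q" by (simp add: Hline_def V_def)
    qed
  qed
qed

lemma Hline_geod:
  assumes P: "P \<in> Hyp" and Q: "Q \<in> Hyp" and ne: "P \<noteq> Q"
  shows "is_geodesic hD Hyp (Hline P Q)"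
proof -
  have u: "unitv P (hdir P Q)" using hdir_props(1)[OF P Q ne] .
  show ?thesis
    unfolding is_geodesic_def local_isometry_line_def Hline_def
  proof (intro exI[of _ "gp P (hdir P Q)"] conjI allI)
    fix t show "gp P (hdir P Q) t \<in> Hyp" by (rule gp_Hyp[OF u])
    show "\<exists>e>0. \<forall>s u. \<bar>s - t\<bar> < e \<longrightarrow> \<bar>u - t\<bar> < e \<longrightarrow> hD (gp P (hdir P Q) s) (gp P (hdir P Q) u) = \<bar>s - u\<bar>"
      by (intro exI[of _ 1]) (simp add: gp_hd[OF u])
  qed simp
qed


definition kap :: "v3 \<Rightarrow> v3 \<Rightarrow> v3 \<Rightarrow> real \<times> real" where
  "kap X V0 Z = (- B Z V0 / B Z X, - B Z (Lc X V0) / B Z X)"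

definition iota :: "v3 \<Rightarrow> v3 \<Rightarrow> real \<times> real \<Rightarrow> v3" where
  "iota X V0 k = (1 / sqrt (1 - (fst k)\<^sup>2 - (snd k)\<^sup>2)) *\<^sub>R (X + fst k *\<^sub>R V0 + snd k *\<^sub>R Lc X V0)"

definition aff :: "v3 \<Rightarrow> v3 \<Rightarrow> v3 \<Rightarrow> real \<times> real \<Rightarrow> real" where
  "aff X V0 N k = B X N + fst k * B V0 N + snd k * B (Lc X V0) N"

lemma frame_B:
  assumes u: "unitv X V0"
  shows "B X X = 1" "B V0 V0 = -1" "B X V0 = 0" "B V0 X = 0" "B X (Lc X V0) = 0" "B (Lc X V0) X = 0"
    "B V0 (Lc X V0) = 0" "B (Lc X V0) V0 = 0" "B (Lc X V0) (Lc X V0) = -1"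
  using u Lc_props[OF u] by (auto simp: unitv_def Hyp_def B_sym)

lemma iota_props:
  assumes u: "unitv X V0" and k: "(fst k)\<^sup>2 + (snd k)\<^sup>2 < 1"
  shows "iota X V0 k \<in> Hyp" "kap X V0 (iota X V0 k) = k"
    "B (iota X V0 k) N = (1 / sqrt (1 - (fst k)\<^sup>2 - (snd k)\<^sup>2)) * aff X V0 N k"
proof -
  note f = frame_B[OF u]
  define c where "c = 1 / sqrt (1 - (fst k)\<^sup>2 - (snd k)\<^sup>2)"
  have pos: "1 - (fst k)\<^sup>2 - (snd k)\<^sup>2 > 0" using k by simp
  have c: "c > 0" using pos by (simp add: c_def)
  have cc: "c * c * (1 - (fst k)\<^sup>2 - (snd k)\<^sup>2) = 1"
  proof -
    have "sqrt (1 - (fst k)\<^sup>2 - (snd k)\<^sup>2) * sqrt (1 - (fst k)\<^sup>2 - (snd k)\<^sup>2) = 1 - (fst k)\<^sup>2 - (snd k)\<^sup>2"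
      using pos by (simp add: real_sqrt_mult_self)
    then show ?thesis using pos by (simp add: c_def field_simps)
  qed
  have I: "iota X V0 k = c *\<^sub>R (X + fst k *\<^sub>R V0 + snd k *\<^sub>R Lc X V0)" by (simp add: iota_def c_def)
  show BN: "B (iota X V0 k) N = (1 / sqrt (1 - (fst k)\<^sup>2 - (snd k)\<^sup>2)) * aff X V0 N k"
    unfolding I by (simp add: B_lin aff_def c_def algebra_simps add_divide_distrib)
  have BX: "B (iota X V0 k) X = c" unfolding I using f by (simp add: B_lin)
  have BV: "B (iota X V0 k) V0 = - c * fst k" unfolding I using f by (simp add: B_lin)
  have BW: "B (iota X V0 k) (Lc X V0) = - c * snd k" unfolding I using f by (simp add: B_lin)
  have "B (iota X V0 k) (iota X V0 k) = c * c * (1 - (fst k)\<^sup>2 - (snd k)\<^sup>2)"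
    unfolding I using f by (simp add: B_lin power2_eq_square algebra_simps)
  then have II: "B (iota X V0 k) (iota X V0 k) = 1" using cc by simp
  have X: "X \<in> Hyp" using u by (simp add: unitv_def)
  show "iota X V0 k \<in> Hyp" by (rule same_cone[OF X II]) (use BX c B_sym in simp)
  show "kap X V0 (iota X V0 k) = k" using BX BV BW c by (simp add: kap_def)
qed

lemma kap_props:
  assumes u: "unitv X V0" and Z: "Z \<in> Hyp"
  shows "(fst (kap X V0 Z))\<^sup>2 + (snd (kap X V0 Z))\<^sup>2 < 1" "iota X V0 (kap X V0 Z) = Z"
proof -
  note f = frame_B[OF u]
  define \<alpha> where "\<alpha> = B Z X"
  define \<beta> where "\<beta> = - B Z V0"
  define \<gamma> where "\<gamma> = - B Z (Lc X V0)"
  have X: "X \<in> Hyp" using u by (simp add: unitv_def)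
  have a1: "\<alpha> \<ge> 1" using rev_CS(1)[OF Z X] \<alpha>_def by simp
  have dec: "Z = \<alpha> *\<^sub>R X + \<beta> *\<^sub>R V0 + \<gamma> *\<^sub>R Lc X V0"
    using frame_decomp[OF u, of Z] by (simp add: \<alpha>_def \<beta>_def \<gamma>_def algebra_simps)
  have "B Z Z = \<alpha> * B Z X + \<beta> * B Z V0 + \<gamma> * B Z (Lc X V0)" by (subst (2) dec) (simp add: B_lin)
  then have s: "\<alpha>*\<alpha> - \<beta>*\<beta> - \<gamma>*\<gamma> = 1" using Z by (simp add: Hyp_def \<alpha>_def \<beta>_def \<gamma>_def)
  have k: "kap X V0 Z = (\<beta> / \<alpha>, \<gamma> / \<alpha>)" by (simp add: kap_def \<alpha>_def \<beta>_def \<gamma>_def)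
  have a0: "\<alpha> > 0" using a1 by simp
  have bg: "\<beta>*\<beta> + \<gamma>*\<gamma> = \<alpha>*\<alpha> - 1" using s by simp
  have ee: "(\<beta>/\<alpha>)\<^sup>2 + (\<gamma>/\<alpha>)\<^sup>2 = (\<alpha>*\<alpha> - 1) / (\<alpha>*\<alpha>)"
    unfolding bg[symmetric] by (simp add: power_divide power2_eq_square add_divide_distrib)
  have "(\<alpha>*\<alpha> - 1) / (\<alpha>*\<alpha>) < 1" using a0 by (simp add: divide_less_eq)
  then show "(fst (kap X V0 Z))\<^sup>2 + (snd (kap X V0 Z))\<^sup>2 < 1" using ee k by simp
  have e: "1 - (\<beta>/\<alpha>)\<^sup>2 - (\<gamma>/\<alpha>)\<^sup>2 = 1 / (\<alpha>*\<alpha>)"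
  proof -
    have "1 - (\<beta>/\<alpha>)\<^sup>2 - (\<gamma>/\<alpha>)\<^sup>2 = 1 - (\<alpha>*\<alpha> - 1) / (\<alpha>*\<alpha>)" using ee by simp
    also have "\<dots> = 1 / (\<alpha>*\<alpha>)" using a0 by (simp add: field_simps)
    finally show ?thesis .
  qed
  have "sqrt (1 - (\<beta>/\<alpha>)\<^sup>2 - (\<gamma>/\<alpha>)\<^sup>2) = 1 / \<alpha>"
    unfolding e using a1 by (simp add: real_sqrt_divide real_sqrt_mult)
  then have "iota X V0 (kap X V0 Z) = \<alpha> *\<^sub>R (X + (\<beta>/\<alpha>) *\<^sub>R V0 + (\<gamma>/\<alpha>) *\<^sub>R Lc X V0)"
    by (simp add: iota_def k)
  also have "\<dots> = Z" using a1 dec by (simp add: algebra_simps)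
  finally show "iota X V0 (kap X V0 Z) = Z" .
qed

lemma kap_inj:
  assumes u: "unitv X V0" and "Z1 \<in> Hyp" "Z2 \<in> Hyp" "kap X V0 Z1 = kap X V0 Z2"
  shows "Z1 = Z2"
  using kap_props(2)[OF u assms(2)] kap_props(2)[OF u assms(3)] assms(4) by metis

lemma K_line:
  assumes u: "unitv X V0" and P: "P \<in> Hyp" and Q: "Q \<in> Hyp" and ne: "P \<noteq> Q"
    and k: "k = ((1 - \<mu>) * fst (kap X V0 P) + \<mu> * fst (kap X V0 Q), (1 - \<mu>) * snd (kap X V0 P) + \<mu> * snd (kap X V0 Q))"
    and kd: "(fst k)\<^sup>2 + (snd k)\<^sup>2 < 1"
  shows "iota X V0 k \<in> Hline P Q"
proof -
  define N where "N = Hn P Q"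
  have ch: "Hline P Q = {Z \<in> Hyp. B Z N = 0}" using Hline_char[OF P Q ne] N_def by simp
  have zero: "aff X V0 N (kap X V0 Z) = 0" if Z: "Z \<in> Hline P Q" for Z
  proof -
    have ZH: "Z \<in> Hyp" and z0: "B Z N = 0" using Z ch by auto
    note kp = kap_props[OF u ZH]
    have "B (iota X V0 (kap X V0 Z)) N = (1 / sqrt (1 - (fst (kap X V0 Z))\<^sup>2 - (snd (kap X V0 Z))\<^sup>2)) * aff X V0 N (kap X V0 Z)"
      by (rule iota_props(3)[OF u kp(1)])
    moreover have "1 - (fst (kap X V0 Z))\<^sup>2 - (snd (kap X V0 Z))\<^sup>2 > 0" using kp(1) by simp
    ultimately show ?thesis using z0 kp(2) by simp
  qed
  have zP: "aff X V0 N (kap X V0 P) = 0" using zero Hline_props(1)[OF P Q ne] by blast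
  have zQ: "aff X V0 N (kap X V0 Q) = 0" using zero Hline_props(2)[OF P Q ne] by blast
  have "aff X V0 N k = (1 - \<mu>) * aff X V0 N (kap X V0 P) + \<mu> * aff X V0 N (kap X V0 Q)"
    unfolding k aff_def by (simp add: algebra_simps)
  then have "aff X V0 N k = 0" using zP zQ by simp
  then have "B (iota X V0 k) N = 0" using iota_props(3)[OF u kd] by simp
  then show ?thesis using ch iota_props(1)[OF u kd] by simp
qed

lemma disk_closure:
  fixes K :: "(real \<times> real) set"
  assumes cl: "\<And>x1 x2 y1 y2 \<mu>. (x1, x2) \<in> K \<Longrightarrow> (y1, y2) \<in> K \<Longrightarrow> (x1, x2) \<noteq> (y1, y2) \<Longrightarrow>
        ((1 - \<mu>) * x1 + \<mu> * y1)\<^sup>2 + ((1 - \<mu>) * x2 + \<mu> * y2)\<^sup>2 < 1 \<Longrightarrow>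
        ((1 - \<mu>) * x1 + \<mu> * y1, (1 - \<mu>) * x2 + \<mu> * y2) \<in> K"
    and O: "(0, 0) \<in> K" and U: "(u1, u2) \<in> K" and W: "(w1, w2) \<in> K"
    and det: "u1 * w2 - u2 * w1 \<noteq> 0"
    and p: "p1\<^sup>2 + p2\<^sup>2 < 1"
  shows "(p1, p2) \<in> K"
proof -
  have cl0: "(t * v1, t * v2) \<in> K" if v: "(v1, v2) \<in> K" "(v1, v2) \<noteq> (0, 0)" and d: "(t * v1)\<^sup>2 + (t * v2)\<^sup>2 < 1" for v1 v2 t
    using cl[OF O v(1), of t] v(2) d by simp
  define dt where "dt = u1 * w2 - u2 * w1"
  define a where "a = (p1 * w2 - p2 * w1) / dt"
  define b where "b = (u1 * p2 - u2 * p1) / dt"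
  have dt: "dt \<noteq> 0" using det dt_def by simp
  have ep1: "p1 = a * u1 + b * w1"
  proof -
    have "a * u1 + b * w1 = ((p1 * w2 - p2 * w1) * u1 + (u1 * p2 - u2 * p1) * w1) / dt"
      by (simp add: a_def b_def add_divide_distrib)
    also have "(p1 * w2 - p2 * w1) * u1 + (u1 * p2 - u2 * p1) * w1 = p1 * dt" by (simp add: dt_def algebra_simps)
    finally show ?thesis using dt by simp
  qed
  have ep2: "p2 = a * u2 + b * w2"
  proof -
    have "a * u2 + b * w2 = ((p1 * w2 - p2 * w1) * u2 + (u1 * p2 - u2 * p1) * w2) / dt"
      by (simp add: a_def b_def add_divide_distrib)
    also have "(p1 * w2 - p2 * w1) * u2 + (u1 * p2 - u2 * p1) * w2 = p2 * dt" by (simp add: dt_def algebra_simps)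
    finally show ?thesis using dt by simp
  qed
  have u0: "(u1, u2) \<noteq> (0, 0)" using det by auto
  have w0: "(w1, w2) \<noteq> (0, 0)" using det by auto
  show ?thesis
  proof (cases "b = 0")
    case True
    then have "(p1, p2) = (a * u1, a * u2)" using ep1 ep2 by simp
    then show ?thesis using cl0[OF U u0, of a] p by simp
  next
    case bn: False
    show ?thesis
    proof (cases "a = 0")
      case True
      then have "(p1, p2) = (b * w1, b * w2)" using ep1 ep2 by simp
      then show ?thesis using cl0[OF W w0, of b] p by simp
    next
      case an: False
      define K0 where "K0 = 1 + 4 * (a * a * (u1 * u1 + u2 * u2) + b * b * (w1 * w1 + w2 * w2))"
      have nu: "u1 * u1 + u2 * u2 \<ge> 0" "w1 * w1 + w2 * w2 \<ge> 0" by simp_all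
      have aa: "a * a * (u1 * u1 + u2 * u2) \<ge> 0" "b * b * (w1 * w1 + w2 * w2) \<ge> 0"
        using nu by simp_all
      have K0: "K0 \<ge> 1" using aa by (simp add: K0_def)
      define l where "l = 1 / K0"
      have l: "l > 0" "l \<le> 1" using K0 by (simp_all add: l_def)
      have KK: "K0 \<le> K0 * K0" using K0 by (simp add: mult_le_cancel_left1)
      have dsk: "(2 * l * c * v1)\<^sup>2 + (2 * l * c * v2)\<^sup>2 < 1"
        if h: "4 * (c * c * (v1 * v1 + v2 * v2)) \<le> K0 - 1" for c v1 v2
      proof -
        have "(2 * l * c * v1)\<^sup>2 + (2 * l * c * v2)\<^sup>2 = 4 * (c * c * (v1 * v1 + v2 * v2)) * (l * l)"
          by (simp add: power2_eq_square algebra_simps)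
        also have "\<dots> = 4 * (c * c * (v1 * v1 + v2 * v2)) / (K0 * K0)" by (simp add: l_def)
        also have "\<dots> < 1"
        proof -
          have "4 * (c * c * (v1 * v1 + v2 * v2)) < K0 * K0" using h KK by linarith
          moreover have "K0 * K0 > 0" using K0 by simp
          ultimately show ?thesis by (simp add: divide_less_eq)
        qed
        finally show ?thesis .
      qed
      define D1 where "D1 = (2 * l * a * u1, 2 * l * a * u2)"
      define D2 where "D2 = (2 * l * b * w1, 2 * l * b * w2)"
      have D1: "D1 \<in> K"
        using cl0[OF U u0, of "2 * l * a"] dsk[of a u1 u2] aa K0_def by (simp add: D1_def mult.assoc)
      have D2: "D2 \<in> K"
        using cl0[OF W w0, of "2 * l * b"] dsk[of b w1 w2] aa K0_def by (simp add: D2_def mult.assoc)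
      have D12: "D1 \<noteq> D2"
      proof
        assume "D1 = D2"
        then have e1: "a * u1 = b * w1" and e2: "a * u2 = b * w2" using l(1) by (simp_all add: D1_def D2_def)
        have "a * dt = (a * u1) * w2 - (a * u2) * w1" by (simp add: dt_def algebra_simps)
        also have "\<dots> = (b * w1) * w2 - (b * w2) * w1" using e1 e2 by simp
        also have "\<dots> = 0" by simp
        finally show False using an dt by simp
      qed
      define q1 where "q1 = l * p1"
      define q2 where "q2 = l * p2"
      have qd: "q1\<^sup>2 + q2\<^sup>2 < 1"
      proof -
        have "q1\<^sup>2 + q2\<^sup>2 = (l * l) * (p1\<^sup>2 + p2\<^sup>2)" by (simp add: q1_def q2_def power2_eq_square algebra_simps)
        also have "\<dots> \<le> 1 * (p1\<^sup>2 + p2\<^sup>2)" using l by (intro mult_right_mono) (auto simp: mult_le_one)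
        finally show ?thesis using p by simp
      qed
      have "(q1, q2) = ((1 - 1/2) * fst D1 + 1/2 * fst D2, (1 - 1/2) * snd D1 + 1/2 * snd D2)"
        by (simp add: q1_def q2_def D1_def D2_def ep1 ep2 algebra_simps)
      moreover have "((1 - 1/2) * fst D1 + 1/2 * fst D2, (1 - 1/2) * snd D1 + 1/2 * snd D2) \<in> K"
        using cl[of "fst D1" "snd D1" "fst D2" "snd D2" "1/2"] D1 D2 D12 qd calculation by simp
      ultimately have Q: "(q1, q2) \<in> K" by simp
      have pnz: "(p1, p2) \<noteq> (0, 0)"
      proof
        assume "(p1, p2) = (0, 0)"
        then have e1: "a * u1 = - (b * w1)" and e2: "a * u2 = - (b * w2)" using ep1 ep2 by simp_all
        have "a * dt = (a * u1) * w2 - (a * u2) * w1" by (simp add: dt_def algebra_simps)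
        also have "\<dots> = (- (b * w1)) * w2 - (- (b * w2)) * w1" using e1 e2 by simp
        also have "\<dots> = 0" by simp
        finally have "a * dt = 0" .
        then show False using an dt by simp
      qed
      have qnz: "(q1, q2) \<noteq> (0, 0)" using pnz l by (auto simp: q1_def q2_def)
      have "(K0 * q1, K0 * q2) \<in> K" using cl0[OF Q qnz, of K0] p K0 by (simp add: q1_def q2_def l_def)
      then show ?thesis using K0 by (simp add: q1_def q2_def l_def)
    qed
  qed
qed


lemma det_zero_par:
  fixes u1 u2 w1 w2 :: real
  assumes "u1 * w2 - u2 * w1 = 0" "(u1, u2) \<noteq> (0, 0)"
  shows "\<exists>t. w1 = t * u1 \<and> w2 = t * u2"
proof (cases "u1 = 0")
  case False
  have "w2 = (w1 / u1) * u2" using assms(1) False by (simp add: field_simps)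
  then show ?thesis using False by (intro exI[of _ "w1 / u1"]) simp
next
  case True
  then have u2: "u2 \<noteq> 0" using assms(2) by simp
  then have "w1 = 0" using assms(1) True by simp
  then show ?thesis using True u2 by (intro exI[of _ "w2 / u2"]) simp
qed

lemma C1:
  assumes Y: "Y \<subseteq> Hyp"
    and cl: "\<And>P Q. P \<in> Y \<Longrightarrow> Q \<in> Y \<Longrightarrow> P \<noteq> Q \<Longrightarrow> Hline P Q \<subseteq> Y"
    and Z1: "Z1 \<in> Y" and Z2: "Z2 \<in> Y" and Z3: "Z3 \<in> Y" and ne: "Z1 \<noteq> Z2" and nc: "Z3 \<notin> Hline Z1 Z2"
  shows "Y = Hyp"
proof -
  have Z1H: "Z1 \<in> Hyp" and Z2H: "Z2 \<in> Hyp" and Z3H: "Z3 \<in> Hyp" using Y Z1 Z2 Z3 by auto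
  define V0 where "V0 = hdir Z1 Z2"
  have u: "unitv Z1 V0" using Hline_props(4)[OF Z1H Z2H ne] V0_def by simp
  note f = frame_B[OF u]
  define K where "K = kap Z1 V0 ` Y"
  have clK: "((1 - \<mu>) * x1 + \<mu> * y1, (1 - \<mu>) * x2 + \<mu> * y2) \<in> K"
    if x: "(x1, x2) \<in> K" and y: "(y1, y2) \<in> K" and xy: "(x1, x2) \<noteq> (y1, y2)"
      and d: "((1 - \<mu>) * x1 + \<mu> * y1)\<^sup>2 + ((1 - \<mu>) * x2 + \<mu> * y2)\<^sup>2 < 1" for x1 x2 y1 y2 \<mu>
  proof -
    obtain P where P: "P \<in> Y" "kap Z1 V0 P = (x1, x2)" using x K_def by auto
    obtain Q where Q: "Q \<in> Y" "kap Z1 V0 Q = (y1, y2)" using y K_def by auto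
    have PQ: "P \<noteq> Q" using P Q xy by auto
    define k where "k = ((1 - \<mu>) * x1 + \<mu> * y1, (1 - \<mu>) * x2 + \<mu> * y2)"
    have kd: "(fst k)\<^sup>2 + (snd k)\<^sup>2 < 1" using d by (simp add: k_def)
    have "iota Z1 V0 k \<in> Hline P Q"
      by (rule K_line[OF u _ _ PQ _ kd, of \<mu>]) (use P Q Y in \<open>auto simp: k_def\<close>)
    then have "iota Z1 V0 k \<in> Y" using cl[OF P(1) Q(1) PQ] by auto
    moreover have "kap Z1 V0 (iota Z1 V0 k) = k" by (rule iota_props(2)[OF u kd])
    ultimately show ?thesis unfolding K_def k_def by (metis image_eqI)
  qed
  have k1: "kap Z1 V0 Z1 = (0, 0)" using f by (simp add: kap_def)
  have O: "(0, 0) \<in> K" using Z1 k1 K_def by (metis image_eqI)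
  obtain u1 u2 where ku: "kap Z1 V0 Z2 = (u1, u2)" by (cases "kap Z1 V0 Z2")
  obtain w1 w2 where kw: "kap Z1 V0 Z3 = (w1, w2)" by (cases "kap Z1 V0 Z3")
  have U: "(u1, u2) \<in> K" using Z2 ku K_def by (metis image_eqI)
  have W: "(w1, w2) \<in> K" using Z3 kw K_def by (metis image_eqI)
  have u0: "(u1, u2) \<noteq> (0, 0)"
  proof
    assume "(u1, u2) = (0, 0)"
    then have "kap Z1 V0 Z2 = kap Z1 V0 Z1" using ku k1 by simp
    then show False using kap_inj[OF u Z2H Z1H] ne by auto
  qed
  have det: "u1 * w2 - u2 * w1 \<noteq> 0"
  proof
    assume "u1 * w2 - u2 * w1 = 0"
    then obtain t where t: "w1 = t * u1" "w2 = t * u2" using det_zero_par u0 by blast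
    define k where "k = ((1 - t) * fst (kap Z1 V0 Z1) + t * fst (kap Z1 V0 Z2), (1 - t) * snd (kap Z1 V0 Z1) + t * snd (kap Z1 V0 Z2))"
    have kk: "k = kap Z1 V0 Z3" using k1 ku kw t by (simp add: k_def)
    have kd: "(fst k)\<^sup>2 + (snd k)\<^sup>2 < 1" using kap_props(1)[OF u Z3H] kk by simp
    have "iota Z1 V0 k \<in> Hline Z1 Z2" by (rule K_line[OF u Z1H Z2H ne k_def kd])
    moreover have "iota Z1 V0 k = Z3" using kap_props(2)[OF u Z3H] kk by simp
    ultimately show False using nc by simp
  qed
  show ?thesis
  proof
    show "Hyp \<subseteq> Y"
    proof
      fix P assume P: "P \<in> Hyp"
      obtain p1 p2 where kp: "kap Z1 V0 P = (p1, p2)" by (cases "kap Z1 V0 P")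
      have pd: "p1\<^sup>2 + p2\<^sup>2 < 1" using kap_props(1)[OF u P] kp by simp
      have "(p1, p2) \<in> K" by (rule disk_closure[OF clK O U W det pd])
      then obtain Q where Q: "Q \<in> Y" "kap Z1 V0 Q = (p1, p2)" unfolding K_def by auto
      have QH: "Q \<in> Hyp" using Q Y by auto
      have "Q = P" by (rule kap_inj[OF u QH P]) (simp add: Q(2) kp)
      then show "P \<in> Y" using Q by simp
    qed
  qed (use Y in auto)
qed

lemma aff_const:
  assumes aff: "\<And>X V. unitv X V \<Longrightarrow> \<exists>c. \<forall>s. f (gp X V s) = f X + c * s"
    and P: "P \<in> Hyp" and Q: "Q \<in> Hyp" and ne: "P \<noteq> Q" and fe: "f P = f Q"
  shows "Z \<in> Hline P Q \<Longrightarrow> f Z = f P"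
proof -
  assume Z: "Z \<in> Hline P Q"
  define V where "V = hdir P Q"
  have u: "unitv P V" using Hline_props(4)[OF P Q ne] V_def by simp
  obtain c where c: "\<And>s. f (gp P V s) = f P + c * s" using aff[OF u] by blast
  have d: "hD P Q > 0" using hD_pos[OF P Q ne] .
  have "f Q = f P + c * hD P Q" using c[of "hD P Q"] hdir_props(2)[OF P Q ne] V_def by simp
  then have "c = 0" using fe d by simp
  obtain s where "Z = gp P V s" using Z by (auto simp: Hline_def V_def)
  then show "f Z = f P" using c \<open>c = 0\<close> by simp
qed

lemma lev_line:
  assumes aff: "\<And>X V. unitv X V \<Longrightarrow> \<exists>c. \<forall>s. f (gp X V s) = f X + c * s"
    and Z1: "Z1 \<in> Hyp" and Z2: "Z2 \<in> Hyp" and nc: "f Z1 \<noteq> f Z2"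
    and A: "A \<in> Hyp" and Bq: "Bp \<in> Hyp" and ne: "A \<noteq> Bp" and fA: "f A = v" and fB: "f Bp = v"
  shows "{Z \<in> Hyp. f Z = v} \<subseteq> Hline A Bp"
proof
  fix Z assume Z: "Z \<in> {Z \<in> Hyp. f Z = v}"
  show "Z \<in> Hline A Bp"
  proof (rule ccontr)
    assume nZ: "Z \<notin> Hline A Bp"
    define Lv where "Lv = {Z \<in> Hyp. f Z = v}"
    have cl: "Hline P Q \<subseteq> Lv" if "P \<in> Lv" "Q \<in> Lv" "P \<noteq> Q" for P Q
      using aff_const[OF aff, of P Q] that Hline_props(3)[of P Q] by (auto simp: Lv_def)
    have "Lv = Hyp" by (rule C1[of Lv A Bp Z]) (use cl A Bq fA fB ne Z nZ in \<open>auto simp: Lv_def\<close>)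
    then have "f Z1 = v" "f Z2 = v" using Z1 Z2 by (auto simp: Lv_def)
    then show False using nc by simp
  qed
qed

lemma hyp_zero:
  fixes c0 c1 :: real
  assumes "\<bar>c1\<bar> > \<bar>c0\<bar>"
  shows "\<exists>s. cosh s * c0 + sinh s * c1 = 0"
proof -
  define r where "r = sqrt (c1 * c1 - c0 * c0)"
  have pos: "c1 * c1 - c0 * c0 > 0"
  proof -
    have "\<bar>c0\<bar> * \<bar>c0\<bar> < \<bar>c1\<bar> * \<bar>c1\<bar>" using assms by (intro mult_strict_mono) auto
    then show ?thesis by (simp add: abs_mult_self_eq)
  qed
  have r: "r > 0" using pos by (simp add: r_def)
  have rr: "r * r = c1 * c1 - c0 * c0" using pos by (simp add: r_def)
  have ch: "cosh (arsinh y) = sqrt (y * y + 1)" for y by (simp add: cosh_arsinh_real power2_eq_square)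
  have e: "(c0 / r) * (c0 / r) + 1 = (c1 / r) * (c1 / r)" using r rr by (simp add: field_simps)
  show ?thesis
  proof (cases "c1 > 0")
    case True
    define s where "s = arsinh (- c0 / r)"
    have "cosh s = sqrt ((c1 / r) * (c1 / r))" using ch[of "- c0 / r"] e by (simp add: s_def)
    also have "\<dots> = \<bar>c1 / r\<bar>" by (rule real_sqrt_abs2)
    also have "\<dots> = c1 / r" using True r by simp
    finally have "cosh s * c0 + sinh s * c1 = c1 / r * c0 + (- c0 / r) * c1" by (simp add: s_def)
    also have "\<dots> = 0" by (simp add: field_simps)
    finally show ?thesis by blast
  next
    case False
    then have c1: "c1 < 0" using assms by auto
    define s where "s = arsinh (c0 / r)"
    have "cosh s = sqrt ((c1 / r) * (c1 / r))" using ch[of "c0 / r"] e by (simp add: s_def)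
    also have "\<dots> = \<bar>c1 / r\<bar>" by (rule real_sqrt_abs2)
    also have "\<dots> = - c1 / r" using c1 r by (simp add: abs_of_neg divide_neg_pos)
    finally have "cosh s * c0 + sinh s * c1 = - c1 / r * c0 + (c0 / r) * c1" by (simp add: s_def)
    also have "\<dots> = 0" by (simp add: field_simps)
    finally show ?thesis by blast
  qed
qed

lemma miss:
  assumes u: "unitv m V" and c0: "B m N \<noteq> 0" and le: "\<bar>B V N\<bar> \<le> \<bar>B m N\<bar>"
  shows "B (gp m V s) N \<noteq> 0"
proof
  assume z: "B (gp m V s) N = 0"
  have e: "B (gp m V s) N = cosh s * B m N + sinh s * B V N" by (simp add: gp_def B_lin)
  have sc: "\<bar>sinh s\<bar> < cosh s" using sinh_less_cosh_real[of s] sinh_less_cosh_real[of "-s"] by (simp add: abs_less_iff)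
  have "\<bar>sinh s * B V N\<bar> \<le> \<bar>sinh s\<bar> * \<bar>B m N\<bar>" using le by (simp add: abs_mult mult_left_mono)
  also have "\<dots> < cosh s * \<bar>B m N\<bar>" using sc c0 by (intro mult_strict_right_mono) auto
  also have "\<dots> = \<bar>cosh s * B m N\<bar>" by (simp add: abs_mult)
  finally have "\<bar>sinh s * B V N\<bar> < \<bar>cosh s * B m N\<bar>" .
  moreover have "cosh s * B m N = - (sinh s * B V N)" using z e by simp
  ultimately show False by simp
qed


lemma no_affine:
  assumes aff: "\<And>X V. unitv X V \<Longrightarrow> \<exists>c. \<forall>s. f (gp X V s) = f X + c * s"
    and Z1: "Z1 \<in> Hyp" and Z2: "Z2 \<in> Hyp" and nc: "f Z1 \<noteq> f Z2"
  shows False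
proof -
  have ne12: "Z1 \<noteq> Z2" using nc by auto
  define V where "V = hdir Z1 Z2"
  have u: "unitv Z1 V" using Hline_props(4)[OF Z1 Z2 ne12] V_def by simp
  define g where "g = gp Z1 V"
  obtain c where c: "\<And>s. f (g s) = f Z1 + c * s" using aff[OF u] g_def by blast
  have "f Z2 = f Z1 + c * hD Z1 Z2" using c[of "hD Z1 Z2"] hdir_props(2)[OF Z1 Z2 ne12] V_def g_def by simp
  then have c0: "c \<noteq> 0" using nc by auto
  have val: "f (g ((v - f Z1) / c)) = v" for v using c[of "(v - f Z1) / c"] c0 by simp
  have M: "Hline Z1 Z2 = range g" by (simp add: Hline_def g_def V_def)
  have gH: "g s \<in> Hyp" for s using gp_Hyp[OF u] g_def by simp
  define W where "W = Lc Z1 V"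
  note fr = frame_B[OF u]
  have uW: "unitv Z1 W" using fr Z1 by (simp add: unitv_def W_def)
  define Z3 where "Z3 = gp Z1 W 1"
  have Z3: "Z3 \<in> Hyp" using gp_Hyp[OF uW] Z3_def by simp
  have Z3M: "Z3 \<notin> range g"
  proof
    assume "Z3 \<in> range g"
    then have "Z3 \<in> Hline Z1 Z2" using M by simp
    then have "B Z3 W = 0" using Hline_char[OF Z1 Z2 ne12] by (simp add: Hn_def W_def V_def)
    moreover have "B Z3 W = - sinh 1" using fr by (simp add: Z3_def gp_def B_lin W_def)
    ultimately show False by simp
  qed
  define v3 where "v3 = f Z3"
  define P0 where "P0 = g ((v3 - f Z1) / c)"
  have fP0: "f P0 = v3" using val P0_def by simp
  have P0: "P0 \<in> Hyp" using gH P0_def by simp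
  have P0ne: "Z3 \<noteq> P0" using Z3M P0_def by auto
  have L3a: "{Z \<in> Hyp. f Z = v3} \<subseteq> Hline Z3 P0"
    by (rule lev_line[OF aff Z1 Z2 nc Z3 P0 P0ne]) (simp_all add: v3_def fP0)
  have L3b: "Z \<in> Hline Z3 P0 \<Longrightarrow> f Z = v3" for Z
    using aff_const[OF aff Z3 P0 P0ne] fP0 v3_def by simp
  define v1 where "v1 = v3 + 1"
  define Q1 where "Q1 = g ((v1 - f Z1) / c)"
  define Q2 where "Q2 = g ((v3 + 2 - f Z1) / c)"
  have fQ1: "f Q1 = v1" and fQ2: "f Q2 = v3 + 2" using val Q1_def Q2_def by auto
  have Q1: "Q1 \<in> Hyp" and Q2: "Q2 \<in> Hyp" using gH Q1_def Q2_def by auto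
  have Q12: "Q1 \<noteq> Q2" using fQ1 fQ2 v1_def by auto
  have Q2ne: "Z3 \<noteq> Q2" using fQ2 v3_def by auto
  define D2 where "D2 = hdir Z3 Q2"
  have u2: "unitv Z3 D2" using Hline_props(4)[OF Z3 Q2 Q2ne] D2_def by simp
  obtain c2 where c2: "\<And>t. f (gp Z3 D2 t) = f Z3 + c2 * t" using aff[OF u2] by blast
  have "f Q2 = f Z3 + c2 * hD Z3 Q2" using c2[of "hD Z3 Q2"] hdir_props(2)[OF Z3 Q2 Q2ne] D2_def by simp
  then have c2nz: "c2 \<noteq> 0" using fQ2 v3_def by auto
  define n1 where "n1 = gp Z3 D2 (1 / c2)"
  have fn1: "f n1 = v1" using c2[of "1 / c2"] c2nz by (simp add: n1_def v1_def v3_def)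
  have n1: "n1 \<in> Hyp" using gp_Hyp[OF u2] n1_def by simp
  have n1Q1: "n1 \<noteq> Q1"
  proof
    assume e: "n1 = Q1"
    have "Q1 = gp Z3 D2 (1 / c2)" using e n1_def by simp
    then have "Q1 \<in> range (gp Z3 D2)" by simp
    then have a: "Q1 \<in> Hline Z3 Q2" by (simp add: Hline_def D2_def)
    have b: "Q2 \<in> Hline Z3 Q2" using Hline_props(2)[OF Z3 Q2 Q2ne] .
    have "Hline Q1 Q2 = Hline Z3 Q2" by (rule Hline_two_points[OF Z3 Q2 Q2ne a b Q12])
    moreover have "Hline Q1 Q2 = Hline Z1 Z2"
      by (rule Hline_two_points[OF Z1 Z2 ne12 _ _ Q12]) (simp_all add: M Q1_def Q2_def)
    ultimately have "Z3 \<in> Hline Z1 Z2" using Hline_props(1)[OF Z3 Q2 Q2ne] by simp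
    then show False using Z3M M by simp
  qed
  have L1a: "{Z \<in> Hyp. f Z = v1} \<subseteq> Hline Q1 n1"
    by (rule lev_line[OF aff Z1 Z2 nc Q1 n1 n1Q1[symmetric]]) (simp_all add: fQ1 fn1)
  have L1b: "Z \<in> Hline Q1 n1 \<Longrightarrow> f Z = v1" for Z
    using aff_const[OF aff Q1 n1 n1Q1[symmetric]] fQ1 fn1 by simp
  define N1 where "N1 = Hn Q1 n1"
  have ch1: "Hline Q1 n1 = {Z \<in> Hyp. B Z N1 = 0}" using Hline_char[OF Q1 n1 n1Q1[symmetric]] N1_def by simp
  have N1N1: "B N1 N1 = -1"
    using Lc_props(3)[OF Hline_props(4)[OF Q1 n1 n1Q1[symmetric]]] by (simp add: N1_def Hn_def)
  define D0 where "D0 = hdir Z3 P0"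
  have u0: "unitv Z3 D0" using Hline_props(4)[OF Z3 P0 P0ne] D0_def by simp
  define W0 where "W0 = Lc Z3 D0"
  note f0 = frame_B[OF u0, folded W0_def]
  have l0: "gp Z3 D0 s \<in> Hline Z3 P0" for s by (simp add: Hline_def D0_def)
  define k0 where "k0 = B Z3 N1"
  define k1 where "k1 = B D0 N1"
  define k2 where "k2 = B W0 N1"
  have k0: "k0 \<noteq> 0"
  proof
    assume "k0 = 0"
    then have "Z3 \<in> Hline Q1 n1" using ch1 Z3 k0_def by simp
    then have "f Z3 = v1" using L1b by simp
    then show False using v1_def v3_def by simp
  qed
  have k1le: "\<bar>k1\<bar> \<le> \<bar>k0\<bar>"
  proof (rule ccontr)
    assume "\<not> ?thesis"
    then obtain s where s: "cosh s * k0 + sinh s * k1 = 0" using hyp_zero by (meson not_le)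
    have "B (gp Z3 D0 s) N1 = cosh s * k0 + sinh s * k1" by (simp add: gp_def B_lin k0_def k1_def)
    then have "gp Z3 D0 s \<in> Hline Q1 n1" using s ch1 gp_Hyp[OF u0] by simp
    then have "f (gp Z3 D0 s) = v1" using L1b by simp
    moreover have "f (gp Z3 D0 s) = v3" using L3b l0 by simp
    ultimately show False using v1_def by simp
  qed
  have decN: "N1 = k0 *\<^sub>R Z3 - k1 *\<^sub>R D0 - k2 *\<^sub>R W0"
    using frame_decomp[OF u0, of N1] by (simp add: k0_def k1_def k2_def W0_def B_sym)
  have "B N1 N1 = k0 * B N1 Z3 - k1 * B N1 D0 - k2 * B N1 W0" by (subst (2) decN) (simp add: B_lin)
  then have kk: "k0 * k0 - k1 * k1 - k2 * k2 = -1" using N1N1 by (simp add: k0_def k1_def k2_def B_sym)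
  obtain p q where q: "q \<noteq> 0" and pq: "\<bar>p * k1 + q * k2\<bar> \<le> \<bar>k0\<bar> * sqrt (p * p + q * q)"
  proof (cases "k1 = 0")
    case False
    have "\<bar>k2 * k1 + (- k1) * k2\<bar> \<le> \<bar>k0\<bar> * sqrt (k2 * k2 + (- k1) * (- k1))" by simp
    then show ?thesis using that[of "- k1" k2] False by simp
  next
    case True
    then have e: "k2 * k2 = k0 * k0 + 1" using kk by simp
    have "k0 * k0 \<ge> 0" by simp
    then have "k2 * k2 > 0" using e by linarith
    then have k2: "k2 \<noteq> 0" by auto
    define q where "q = k0 / k2"
    have qn: "q \<noteq> 0" using k0 k2 by (simp add: q_def)
    have "\<bar>1 * k1 + q * k2\<bar> = \<bar>k0\<bar>" using True k2 by (simp add: q_def)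
    also have "\<dots> \<le> \<bar>k0\<bar> * sqrt (1 * 1 + q * q)"
    proof -
      have "1 \<le> sqrt (1 * 1 + q * q)" by simp
      then show ?thesis by (simp add: mult_le_cancel_left1)
    qed
    finally show ?thesis using that[of q 1] qn by simp
  qed
  define \<rho> where "\<rho> = sqrt (p * p + q * q)"
  have "q * q > 0" using q not_real_square_gt_zero by blast
  moreover have "p * p \<ge> 0" by simp
  ultimately have pp: "p * p + q * q > 0" by linarith
  have \<rho>: "\<rho> > 0" using pp by (simp add: \<rho>_def)
  have \<rho>\<rho>: "\<rho> * \<rho> = p * p + q * q" using pp by (simp add: \<rho>_def)
  define V' where "V' = (p / \<rho>) *\<^sub>R D0 + (q / \<rho>) *\<^sub>R W0"
  have uV': "unitv Z3 V'"
  proof -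
    have "B Z3 V' = 0" using f0 by (simp add: V'_def B_lin)
    moreover have "B V' V' = - ((p * p + q * q) / (\<rho> * \<rho>))"
      using f0 by (simp add: V'_def B_lin algebra_simps add_divide_distrib)
    moreover have "(p * p + q * q) / (\<rho> * \<rho>) = 1" unfolding \<rho>\<rho>[symmetric] using \<rho> by simp
    ultimately show ?thesis using Z3 by (simp add: unitv_def)
  qed
  have BV': "B V' N1 = (p * k1 + q * k2) / \<rho>"
    by (simp add: V'_def B_lin k1_def k2_def add_divide_distrib)
  have "\<bar>B V' N1\<bar> \<le> \<bar>k0\<bar>"
  proof -
    have "\<bar>B V' N1\<bar> = \<bar>p * k1 + q * k2\<bar> / \<rho>" using \<rho> BV' by simp
    also have "\<dots> \<le> \<bar>k0\<bar> * \<rho> / \<rho>" using pq \<rho> by (intro divide_right_mono) (auto simp: \<rho>_def)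
    also have "\<dots> = \<bar>k0\<bar>" using \<rho> by simp
    finally show ?thesis .
  qed
  then have miss': "B (gp Z3 V' s) N1 \<noteq> 0" for s using miss[OF uV', of N1] k0 by (simp add: k0_def)
  obtain \<phi> where \<phi>: "\<And>s. f (gp Z3 V' s) = f Z3 + \<phi> * s" using aff[OF uV'] by blast
  have "\<phi> = 0"
  proof (rule ccontr)
    assume "\<phi> \<noteq> 0"
    then have "f (gp Z3 V' (1 / \<phi>)) = v1" using \<phi>[of "1/\<phi>"] by (simp add: v1_def v3_def)
    then have "gp Z3 V' (1 / \<phi>) \<in> Hline Q1 n1" using L1a gp_Hyp[OF uV'] by blast
    then show False using ch1 miss' by auto
  qed
  then have "f (gp Z3 V' 1) = v3" using \<phi> v3_def by simp
  then have "gp Z3 V' 1 \<in> Hline Z3 P0" using L3a gp_Hyp[OF uV'] by blast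
  then obtain s where s: "gp Z3 V' 1 = gp Z3 D0 s" by (auto simp: Hline_def D0_def)
  have "B (gp Z3 D0 s) W0 = 0" using f0 by (simp add: gp_def B_lin)
  moreover have "B (gp Z3 V' 1) W0 = - sinh 1 * (q / \<rho>)" using f0 by (simp add: gp_def V'_def B_lin)
  moreover have "sinh 1 * (q / \<rho>) \<noteq> 0" using q \<rho> by simp
  ultimately show False using s by simp
qed


lemma Fl_0: "Fl X V (0, t) = (X, t)" by (simp add: Fl_def)

lemma Fl_hd:
  assumes Z: "Z \<in> Hyp" and W: "W \<in> Hyp" and ne: "Z \<noteq> W"
  shows "Fl Z (hdir Z W) (hD Z W, t) = (W, t)"
  using hdir_props(2)[OF Z W ne] by (simp add: Fl_def)

lemma flat_fill:
  assumes TG: "totally_geodesic pd HRp X'" and u: "unitv X V"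
    and A: "Fl X V Pa \<in> X'" and Bb: "Fl X V Pb \<in> X'" and C: "Fl X V Pc \<in> X'"
    and ne: "Pa \<noteq> Pb" and nc: "Pc \<notin> Eline Pa Pb"
  shows "Fl X V p \<in> X'"
proof -
  define E where "E = {p. Fl X V p \<in> X'}"
  have cl: "Eline P Q \<subseteq> E" if "P \<in> E" "Q \<in> E" "P \<noteq> Q" for P Q
    using flat_closed[OF TG u, of P Q] that by (auto simp: E_def)
  have "E = UNIV" by (rule R2_closure[of E Pa Pb Pc]) (use cl A Bb C ne nc in \<open>auto simp: E_def\<close>)
  then show ?thesis by (auto simp: E_def)
qed

theorem main_hyp:
  assumes NT: "nontrivial_totally_geodesic pd HRp X'"
  shows "(\<exists>r. X' = Hyp \<times> {r}) \<or> (\<exists>\<gamma>. is_geodesic hD Hyp \<gamma> \<and> X' = \<gamma> \<times> UNIV)"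
proof -
  have TG: "totally_geodesic pd HRp X'" and ng: "\<not> is_geodesic pd HRp X'" and nS: "X' \<noteq> HRp"
    using NT by (auto simp: nontrivial_totally_geodesic_def)
  have sub: "X' \<subseteq> HRp" and nemp: "X' \<noteq> {}" using TG by (auto simp: totally_geodesic_def)
  have TL: "Lset P Q \<subseteq> X'" if "P \<in> X'" "Q \<in> X'" "P \<noteq> Q" for P Q using TG_line[OF TG that] .
  have two: "\<exists>P Q. P \<in> X' \<and> Q \<in> X' \<and> P \<noteq> Q"
  proof -
    obtain p where p: "p \<in> X'" using nemp by auto
    obtain G where G: "is_geodesic pd HRp G" "G \<subseteq> X'" using TG p unfolding totally_geodesic_def by blast
    obtain l where l: "is_line l" "G = range l" using geod_is_line[OF G(1)] by blast
    have "pd (l 0) (l 1) = 1" using line_pd[OF l(1), of 0 1] by simp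
    then have "l 0 \<noteq> l 1" using pd_self[OF line_HR[OF l(1)]] by auto
    then show ?thesis using G(2) l(2) by blast
  qed
  have NG: "\<exists>R \<in> X'. R \<notin> Lset P Q" if PQ: "P \<in> X'" "Q \<in> X'" "P \<noteq> Q" for P Q
  proof (rule ccontr)
    assume "\<not> ?thesis"
    then have "X' = Lset P Q" using TL[OF PQ] by auto
    then show False using ng Lset_props(3)[of P Q] PQ sub by auto
  qed
  have inHyp: "fst P \<in> Hyp" if "P \<in> X'" for P using sub that by (auto simp: HRp_def)
  show ?thesis
  proof (cases "\<exists>Z h k. h \<noteq> k \<and> (Z, h) \<in> X' \<and> (Z, k) \<in> X'")
    case True
    then obtain Z h k where hk: "h \<noteq> k" and Zh: "(Z, h) \<in> X'" and Zk: "(Z, k) \<in> X'" by blast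
    have ZH: "Z \<in> Hyp" using inHyp[OF Zh] by simp
    have vert: "(Z, t) \<in> X'" for t using TL[OF Zh Zk] vert_Lset[OF ZH hk] hk by auto
    have sat: "(W, t) \<in> X'" if W: "(W, h') \<in> X'" for W h' t
    proof (cases "W = Z")
      case True then show ?thesis using vert by simp
    next
      case False
      have WH: "W \<in> Hyp" using inHyp[OF W] by simp
      have ne: "Z \<noteq> W" using False by simp
      have u: "unitv Z (hdir Z W)" using Hline_props(4)[OF ZH WH ne] .
      have d: "hD Z W \<noteq> 0" using hD_pos[OF ZH WH ne] by simp
      have "Fl Z (hdir Z W) (hD Z W, t) \<in> X'"
      proof (rule flat_fill[OF TG u, of "(0,0)" "(0,1)" "(hD Z W, h')"])
        show "Fl Z (hdir Z W) (0, 0) \<in> X'" "Fl Z (hdir Z W) (0, 1) \<in> X'" using vert by (simp_all add: Fl_0)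
        show "Fl Z (hdir Z W) (hD Z W, h') \<in> X'" using W Fl_hd[OF ZH WH ne] by simp
        show "(0::real, 0::real) \<noteq> (0, 1)" by simp
        show "(hD Z W, h') \<notin> Eline (0, 0) (0, 1)" using d by (simp add: Eline_iff)
      qed
      then show ?thesis using Fl_hd[OF ZH WH ne] by simp
    qed
    define Y where "Y = fst ` X'"
    have XY: "X' = Y \<times> UNIV"
    proof
      show "X' \<subseteq> Y \<times> UNIV"
      proof
        fix z assume "z \<in> X'"
        then have "fst z \<in> Y" by (simp add: Y_def)
        then show "z \<in> Y \<times> UNIV" by (simp add: mem_Times_iff)
      qed
      show "Y \<times> UNIV \<subseteq> X'"
      proof
        fix z assume "z \<in> Y \<times> (UNIV :: real set)"
        then obtain W t h' where "z = (W, t)" "(W, h') \<in> X'" by (auto simp: Y_def)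
        then show "z \<in> X'" using sat by simp
      qed
    qed
    have YH: "Y \<subseteq> Hyp" using inHyp by (auto simp: Y_def)
    have Ycl: "Hline Z1 Z2 \<subseteq> Y" if Z1: "Z1 \<in> Y" and Z2: "Z2 \<in> Y" and ne: "Z1 \<noteq> Z2" for Z1 Z2
    proof
      fix Z' assume Z': "Z' \<in> Hline Z1 Z2"
      have Z1H: "Z1 \<in> Hyp" and Z2H: "Z2 \<in> Hyp" using YH Z1 Z2 by auto
      have u: "unitv Z1 (hdir Z1 Z2)" using Hline_props(4)[OF Z1H Z2H ne] .
      have d: "hD Z1 Z2 \<noteq> 0" using hD_pos[OF Z1H Z2H ne] by simp
      have in1: "(Z1, t) \<in> X'" and in2: "(Z2, t) \<in> X'" for t using Z1 Z2 XY by auto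
      obtain s where s: "Z' = gp Z1 (hdir Z1 Z2) s" using Z' by (auto simp: Hline_def)
      have "Fl Z1 (hdir Z1 Z2) (s, 0) \<in> X'"
      proof (rule flat_fill[OF TG u, of "(0,0)" "(0,1)" "(hD Z1 Z2, 0)"])
        show "Fl Z1 (hdir Z1 Z2) (0, 0) \<in> X'" "Fl Z1 (hdir Z1 Z2) (0, 1) \<in> X'" using in1 by (simp_all add: Fl_0)
        show "Fl Z1 (hdir Z1 Z2) (hD Z1 Z2, 0) \<in> X'" using in2 Fl_hd[OF Z1H Z2H ne] by simp
        show "(0::real, 0::real) \<noteq> (0, 1)" by simp
        show "(hD Z1 Z2, 0) \<notin> Eline (0, 0) (0, 1)" using d by (simp add: Eline_iff)
      qed
      then have "(Z', 0) \<in> X'" using s by (simp add: Fl_def)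
      then show "Z' \<in> Y" unfolding Y_def by (rule rev_image_eqI) simp
    qed
    have ZY: "Z \<in> Y" using Zh by (force simp: Y_def)
    have "\<exists>W\<in>Y. W \<noteq> Z"
    proof (rule ccontr)
      assume "\<not> ?thesis"
      then have "Y \<subseteq> {Z}" by auto
      then have "X' \<subseteq> {Z} \<times> UNIV" using XY by auto
      moreover have "{Z} \<times> UNIV \<subseteq> X'" using vert by auto
      ultimately have "X' = {Z} \<times> UNIV" by blast
      then have "X' = Lset (Z, 0) (Z, 1)" using vert_Lset[OF ZH, of 0 1] by simp
      then show False using ng Lset_props(3)[of "(Z,0)" "(Z,1)"] ZH by (auto simp: HRp_def)
    qed
    then obtain W where W: "W \<in> Y" "W \<noteq> Z" by blast
    define Z1 where "Z1 = Z"
    define Z2 where "Z2 = W"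
    have Z12: "Z1 \<in> Y" "Z2 \<in> Y" "Z1 \<noteq> Z2" using ZY W by (auto simp: Z1_def Z2_def)
    have Z1H: "Z1 \<in> Hyp" and Z2H: "Z2 \<in> Hyp" using YH Z12 by auto
    show ?thesis
    proof (cases "Y \<subseteq> Hline Z1 Z2")
      case True
      then have "Y = Hline Z1 Z2" using Ycl[OF Z12] by auto
      then have "X' = Hline Z1 Z2 \<times> UNIV" using XY by simp
      then show ?thesis using Hline_geod[OF Z1H Z2H Z12(3)] by blast
    next
      case False
      then obtain Z3 where Z3: "Z3 \<in> Y" "Z3 \<notin> Hline Z1 Z2" by auto
      have "Y = Hyp" by (rule C1[OF YH Ycl Z12(1) Z12(2) Z3(1) Z12(3) Z3(2)])
      then have "X' = HRp" using XY by (simp add: HRp_def)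
      then show ?thesis using nS by simp
    qed
  next
    case False
    have inj: "P = Q" if PQ: "P \<in> X'" "Q \<in> X'" "fst P = fst Q" for P Q
    proof -
      obtain a b where Pq: "P = (a, b)" by (cases P)
      obtain c d where Qq: "Q = (c, d)" by (cases Q)
      have ac: "a = c" using PQ(3) Pq Qq by simp
      have "b = d"
      proof (rule ccontr)
        assume "b \<noteq> d"
        have "(a, b) \<in> X'" "(a, d) \<in> X'" using PQ(1,2) Pq Qq ac by simp_all
        then have "\<exists>Z h k. h \<noteq> k \<and> (Z, h) \<in> X' \<and> (Z, k) \<in> X'" using \<open>b \<noteq> d\<close> by blast
        with False show False by (rule notE)
      qed
      then show ?thesis using Pq Qq ac by simp
    qed
    show ?thesis
    proof (cases "\<forall>P\<in>X'. \<forall>Q\<in>X'. snd P = snd Q")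
      case True
      obtain P0 where P0: "P0 \<in> X'" using nemp by auto
      define r where "r = snd P0"
      have sr: "snd P = r" if "P \<in> X'" for P using True that P0 unfolding r_def by blast
      define Y where "Y = fst ` X'"
      have XY: "X' = Y \<times> {r}"
      proof
        show "X' \<subseteq> Y \<times> {r}"
        proof
          fix z assume z: "z \<in> X'"
          then have "fst z \<in> Y" by (simp add: Y_def)
          then show "z \<in> Y \<times> {r}" using sr[OF z] by (simp add: mem_Times_iff)
        qed
        show "Y \<times> {r} \<subseteq> X'"
        proof
          fix z assume "z \<in> Y \<times> {r}"
          then obtain W where W: "W \<in> Y" "z = (W, r)" by auto
          then obtain P where P: "P \<in> X'" "W = fst P" unfolding Y_def by blast
          have "P = (fst P, snd P)" by simp
          then show "z \<in> X'" using sr[OF P(1)] P W(2) by simp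
        qed
      qed
      have YH: "Y \<subseteq> Hyp" using inHyp by (auto simp: Y_def)
      have Ycl: "Hline Z1 Z2 \<subseteq> Y" if Z1: "Z1 \<in> Y" and Z2: "Z2 \<in> Y" and ne: "Z1 \<noteq> Z2" for Z1 Z2
      proof -
        have Z1H: "Z1 \<in> Hyp" and Z2H: "Z2 \<in> Hyp" using YH Z1 Z2 by auto
        have "(Z1, r) \<in> X'" "(Z2, r) \<in> X'" using Z1 Z2 XY by auto
        then have "Lset (Z1, r) (Z2, r) \<subseteq> X'" using TL ne by simp
        then show ?thesis using horiz_Lset[OF Z1H Z2H ne] XY by auto
      qed
      obtain P Q where PQ: "P \<in> X'" "Q \<in> X'" "P \<noteq> Q" using two by blast
      define Z1 where "Z1 = fst P"
      define Z2 where "Z2 = fst Q"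
      have Z12a: "Z1 \<in> Y" "Z2 \<in> Y" using PQ by (auto simp: Z1_def Z2_def Y_def)
      have "Z1 \<noteq> Z2"
      proof
        assume "Z1 = Z2"
        then have "P = Q" using inj[OF PQ(1) PQ(2)] by (simp add: Z1_def Z2_def)
        then show False using PQ(3) by simp
      qed
      note Z12 = Z12a this
      have Z1H: "Z1 \<in> Hyp" and Z2H: "Z2 \<in> Hyp" using YH Z12 by auto
      show ?thesis
      proof (cases "Y \<subseteq> Hline Z1 Z2")
        case True
        then have "Y = Hline Z1 Z2" using Ycl[OF Z12] by auto
        then have "X' = Lset (Z1, r) (Z2, r)" using XY horiz_Lset[OF Z1H Z2H Z12(3)] by simp
        then show ?thesis using ng Lset_props(3)[of "(Z1,r)" "(Z2,r)"] Z1H Z2H Z12(3) by (auto simp: HRp_def)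
      next
        case False
        then obtain Z3 where Z3: "Z3 \<in> Y" "Z3 \<notin> Hline Z1 Z2" by auto
        have "Y = Hyp" by (rule C1[OF YH Ycl Z12(1) Z12(2) Z3(1) Z12(3) Z3(2)])
        then show ?thesis using XY by blast
      qed
    next
      case False
      then obtain P Q where PQ: "P \<in> X'" "Q \<in> X'" "snd P \<noteq> snd Q" by blast
      obtain Z1 h where P: "P = (Z1, h)" by (cases P)
      obtain Z2 k where Q: "Q = (Z2, k)" by (cases Q)
      have hk: "h \<noteq> k" using PQ P Q by simp
      have PQne: "P \<noteq> Q" using hk P Q by simp
      have Z12: "Z1 \<noteq> Z2" using inj[OF PQ(1) PQ(2)] PQne P Q by auto
      have Z1H: "Z1 \<in> Hyp" using inHyp[OF PQ(1)] P by simp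
      have Z2H: "Z2 \<in> Hyp" using inHyp[OF PQ(2)] Q by simp
      obtain R where R: "R \<in> X'" "R \<notin> Lset P Q" using NG[OF PQ(1) PQ(2) PQne] by blast
      obtain Z3 h3 where Rq: "R = (Z3, h3)" by (cases R)
      have Z3H: "Z3 \<in> Hyp" using inHyp[OF R(1)] Rq by simp
      show ?thesis
      proof (cases "Z3 \<in> Hline Z1 Z2")
        case True
        define V where "V = hdir Z1 Z2"
        have u: "unitv Z1 V" using Hline_props(4)[OF Z1H Z2H Z12] V_def by simp
        obtain \<sigma> where \<sigma>: "Z3 = gp Z1 V \<sigma>" using True by (auto simp: Hline_def V_def)
        have FP: "Fl Z1 V (0, h) = P" using P by (simp add: Fl_0)
        have FQ: "Fl Z1 V (hD Z1 Z2, k) = Q" using Q Fl_hd[OF Z1H Z2H Z12] V_def by simp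
        have FR: "Fl Z1 V (\<sigma>, h3) = R" using Rq \<sigma> by (simp add: Fl_def)
        have ne0: "(0, h) \<noteq> (hD Z1 Z2, k)" using hk by simp
        have nc: "(\<sigma>, h3) \<notin> Eline (0, h) (hD Z1 Z2, k)"
        proof
          assume "(\<sigma>, h3) \<in> Eline (0, h) (hD Z1 Z2, k)"
          then have "R \<in> Fl Z1 V ` Eline (0, h) (hD Z1 Z2, k)" using FR by (metis image_eqI)
          then have "R \<in> Lset P Q" using flat_Lset[OF u ne0] FP FQ by simp
          then show False using R by simp
        qed
        have "Fl Z1 V (0, h + 1) \<in> X'"
          by (rule flat_fill[OF TG u _ _ _ ne0 nc]) (use FP FQ FR PQ R in simp_all)
        then have "(Z1, h + 1) \<in> X'" by (simp add: Fl_0)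
        then have "(Z1, h + 1) = (Z1, h)" using inj[OF _ PQ(1)[unfolded P]] by simp
        then show ?thesis by simp
      next
        case False
        define Y where "Y = fst ` X'"
        have YH: "Y \<subseteq> Hyp" using inHyp by (auto simp: Y_def)
        have Ycl: "Hline W1 W2 \<subseteq> Y" if W1: "W1 \<in> Y" and W2: "W2 \<in> Y" and ne: "W1 \<noteq> W2" for W1 W2
        proof -
          obtain a where a: "(W1, a) \<in> X'" using W1 by (auto simp: Y_def)
          obtain b where b: "(W2, b) \<in> X'" using W2 by (auto simp: Y_def)
          have W1H: "W1 \<in> Hyp" and W2H: "W2 \<in> Hyp" using YH W1 W2 by auto
          have "Lset (W1, a) (W2, b) \<subseteq> X'" using TL[OF a b] ne by simp
          then have "fst ` Lset (W1, a) (W2, b) \<subseteq> Y" by (auto simp: Y_def)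
          then show ?thesis using fst_Lset[OF W1H W2H ne] by simp
        qed
        have inY: "W \<in> Y" if "(W, t) \<in> X'" for W t unfolding Y_def by (rule rev_image_eqI[OF that]) simp
        have "Y = Hyp"
          by (rule C1[OF YH Ycl inY inY inY Z12 False]) (use PQ P Q R Rq in simp_all)
        have ex: "\<exists>t. (Z, t) \<in> X'" if "Z \<in> Hyp" for Z
        proof -
          have "Z \<in> fst ` X'" using that \<open>Y = Hyp\<close> by (simp add: Y_def)
          then obtain P where "P \<in> X'" "Z = fst P" by blast
          then have "(Z, snd P) \<in> X'" by simp
          then show ?thesis by blast
        qed
        define f where "f = (\<lambda>Z. SOME t. (Z, t) \<in> X')"
        have fin: "(Z, f Z) \<in> X'" if "Z \<in> Hyp" for Z using someI_ex[OF ex[OF that]] by (simp add: f_def)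
        have funi: "t = f Z" if "Z \<in> Hyp" "(Z, t) \<in> X'" for Z t
          using inj[OF that(2) fin[OF that(1)]] by simp
        have aff: "\<exists>c. \<forall>s. f (gp X V s) = f X + c * s" if u: "unitv X V" for X V
        proof -
          have XH: "X \<in> Hyp" using u by (simp add: unitv_def)
          define Z' where "Z' = gp X V 1"
          have Z'H: "Z' \<in> Hyp" using gp_Hyp[OF u] Z'_def by simp
          have ne: "X \<noteq> Z'" using gp_inj[OF u, of 0 1] Z'_def by auto
          have hdV: "hdir X Z' = V" using hdir_gp[OF u, of 1] Z'_def by simp
          have PX: "(X, f X) \<in> HRp" and PZ: "(Z', f Z') \<in> HRp" using XH Z'H by (auto simp: HRp_def)
          have ne': "(X, f X) \<noteq> (Z', f Z')" using ne by simp
          define D where "D = pd (X, f X) (Z', f Z')"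
          have D: "D > 0" using pd_pos[OF PX PZ ne'] D_def by simp
          define A where "A = hD X Z' / D"
          define Bc where "Bc = (f Z' - f X) / D"
          have A: "A > 0" using hD_pos[OF XH Z'H ne] D by (simp add: A_def)
          have lin: "lineP (X, f X) (Z', f Z') t = (gp X V (A * t), Bc * t + f X)" for t
            by (simp add: lineP_def hl_def hdV A_def Bc_def D_def)
          have "Lset (X, f X) (Z', f Z') \<subseteq> X'" using TL[OF fin[OF XH] fin[OF Z'H] ne'] .
          then have mem: "lineP (X, f X) (Z', f Z') (s / A) \<in> X'" for s unfolding Lset_def by blast
          have "f (gp X V s) = f X + (Bc / A) * s" for s
          proof -
            have "lineP (X, f X) (Z', f Z') (s / A) = (gp X V s, Bc * (s / A) + f X)" using lin[of "s / A"] A by simp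
            then have "(gp X V s, Bc * (s / A) + f X) \<in> X'" using mem[of s] by simp
            then have "Bc * (s / A) + f X = f (gp X V s)" using funi[OF gp_Hyp[OF u]] by blast
            then show ?thesis by simp
          qed
          then show ?thesis by blast
        qed
        have "h = f Z1" by (rule funi[OF Z1H]) (use PQ P in simp)
        moreover have "k = f Z2" by (rule funi[OF Z2H]) (use PQ Q in simp)
        ultimately have "f Z1 = h" "f Z2 = k" by simp_all
        then have "f Z1 \<noteq> f Z2" using hk by simp
        then show ?thesis using no_affine[OF aff Z1H Z2H] by blast
      qed
    qed
  qed
qed


lemma tr_lil:
  assumes TS: "\<And>p. p \<in> S \<Longrightarrow> T p \<in> S'" and iso: "\<And>p q. p \<in> S \<Longrightarrow> q \<in> S \<Longrightarrow> d' (T p) (T q) = d p q"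
    and c: "local_isometry_line d S c"
  shows "local_isometry_line d' S' (T \<circ> c)"
proof -
  have cS: "c t \<in> S" for t using c by (simp add: local_isometry_line_def)
  show ?thesis
    unfolding local_isometry_line_def
  proof (intro conjI allI)
    fix t show "(T \<circ> c) t \<in> S'" using TS cS by simp
    obtain e where e: "e > 0" "\<forall>s u. \<bar>s - t\<bar> < e \<longrightarrow> \<bar>u - t\<bar> < e \<longrightarrow> d (c s) (c u) = \<bar>s - u\<bar>"
      using c unfolding local_isometry_line_def by blast
    show "\<exists>e>0. \<forall>s u. \<bar>s - t\<bar> < e \<longrightarrow> \<bar>u - t\<bar> < e \<longrightarrow> d' ((T \<circ> c) s) ((T \<circ> c) u) = \<bar>s - u\<bar>"
      using e iso cS by (intro exI[of _ e]) auto
  qed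
qed

lemma tr_geo:
  assumes TS: "\<And>p. p \<in> S \<Longrightarrow> T p \<in> S'" and iso: "\<And>p q. p \<in> S \<Longrightarrow> q \<in> S \<Longrightarrow> d' (T p) (T q) = d p q"
    and G: "is_geodesic d S G"
  shows "is_geodesic d' S' (T ` G)"
proof -
  obtain c where c: "local_isometry_line d S c" "G = range c" using G by (auto simp: is_geodesic_def)
  have "local_isometry_line d' S' (T \<circ> c)" by (rule tr_lil[OF TS iso c(1)])
  moreover have "T ` G = range (T \<circ> c)" using c(2) by (simp add: image_comp)
  ultimately show ?thesis unfolding is_geodesic_def by blast
qed

lemma tr_TG:
  assumes TS: "\<And>p. p \<in> S \<Longrightarrow> T p \<in> S'" and iso: "\<And>p q. p \<in> S \<Longrightarrow> q \<in> S \<Longrightarrow> d' (T p) (T q) = d p q"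
    and X: "totally_geodesic d S X"
  shows "totally_geodesic d' S' (T ` X)"
  unfolding totally_geodesic_def
proof (intro conjI ballI)
  show "T ` X \<noteq> {}" using X by (simp add: totally_geodesic_def)
  show "T ` X \<subseteq> S'" using X TS by (auto simp: totally_geodesic_def)
  fix p' q' assume p': "p' \<in> T ` X" and q': "q' \<in> T ` X"
  obtain p q where pq: "p \<in> X" "q \<in> X" "p' = T p" "q' = T q" using p' q' by auto
  obtain G where G: "is_geodesic d S G" "G \<subseteq> X" "p \<in> G" "q \<in> G"
    using X pq unfolding totally_geodesic_def by blast
  show "\<exists>G. is_geodesic d' S' G \<and> G \<subseteq> T ` X \<and> p' \<in> G \<and> q' \<in> G"
    using tr_geo[OF TS iso G(1)] G pq by (intro exI[of _ "T ` G"]) auto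
qed

lemma tr_NTG:
  assumes TS: "\<And>p. p \<in> S \<Longrightarrow> T p \<in> S'" and TpS: "\<And>q. q \<in> S' \<Longrightarrow> T' q \<in> S"
    and inv1: "\<And>p. p \<in> S \<Longrightarrow> T' (T p) = p" and inv2: "\<And>q. q \<in> S' \<Longrightarrow> T (T' q) = q"
    and iso: "\<And>p q. p \<in> S \<Longrightarrow> q \<in> S \<Longrightarrow> d' (T p) (T q) = d p q"
    and X: "nontrivial_totally_geodesic d S X"
  shows "nontrivial_totally_geodesic d' S' (T ` X)"
proof -
  have TG: "totally_geodesic d S X" and ng: "\<not> is_geodesic d S X" and nS: "X \<noteq> S"
    using X by (auto simp: nontrivial_totally_geodesic_def)
  have XS: "X \<subseteq> S" using TG by (simp add: totally_geodesic_def)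
  have iso2: "d (T' p) (T' q) = d' p q" if "p \<in> S'" "q \<in> S'" for p q
    using iso[OF TpS[OF that(1)] TpS[OF that(2)]] inv2 that by simp
  have bk: "T' ` T ` X = X"
  proof -
    have "T' ` T ` X = (\<lambda>p. T' (T p)) ` X" by (simp add: image_image)
    also have "\<dots> = X" using inv1 XS by (auto simp: image_iff) (metis subsetD)
    finally show ?thesis .
  qed
  have "\<not> is_geodesic d' S' (T ` X)"
  proof
    assume a: "is_geodesic d' S' (T ` X)"
    have "is_geodesic d S (T' ` T ` X)" by (rule tr_geo[of S' T' S d d', OF TpS iso2 a])
    then show False using bk ng by simp
  qed
  moreover have "T ` X \<noteq> S'"
  proof
    assume e: "T ` X = S'"
    have "S \<subseteq> X"
    proof
      fix p assume p: "p \<in> S"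
      then have "T p \<in> T ` X" using e TS by simp
      then obtain x where "x \<in> X" "T p = T x" by auto
      then have "T' (T p) = T' (T x)" by simp
      then show "p \<in> X" using inv1 p \<open>x \<in> X\<close> XS by (metis subsetD)
    qed
    then show False using XS nS by auto
  qed
  ultimately show ?thesis using tr_TG[OF TS iso TG] by (simp add: nontrivial_totally_geodesic_def)
qed

definition Tm :: "complex \<times> real \<Rightarrow> v3 \<times> real" where
  "Tm p = (Phi (fst p), snd p)"

definition Tm' :: "v3 \<times> real \<Rightarrow> complex \<times> real" where
  "Tm' q = (Phinv (fst q), snd q)"

theorem mainTheorem3:
  assumes "nontrivial_totally_geodesic pdist HR X"
  shows "(\<exists>r. X = H2 \<times> {r}) \<or> (\<exists>\<gamma>. is_geodesic hdist H2 \<gamma> \<and> X = \<gamma> \<times> UNIV)"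
proof -
  have TS: "Tm p \<in> HRp" if "p \<in> HR" for p using that Phi_Hyp by (auto simp: Tm_def HR_def HRp_def H2_def)
  have TpS: "Tm' q \<in> HR" if "q \<in> HRp" for q using that Phinv_Im by (auto simp: Tm'_def HR_def HRp_def H2_def)
  have inv1: "Tm' (Tm p) = p" if "p \<in> HR" for p using that Phinv_Phi by (auto simp: Tm_def Tm'_def HR_def H2_def)
  have inv2: "Tm (Tm' q) = q" if "q \<in> HRp" for q using that Phi_Phinv by (auto simp: Tm_def Tm'_def HRp_def)
  have iso: "pd (Tm p) (Tm q) = pdist p q" if "p \<in> HR" "q \<in> HR" for p q
    using that hdist_hd by (auto simp: Tm_def pd_def pdist_def HR_def H2_def)
  have XS: "X \<subseteq> HR" using assms by (simp add: nontrivial_totally_geodesic_def totally_geodesic_def)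
  have bk: "Tm' ` Tm ` X = X"
  proof -
    have "Tm' ` Tm ` X = (\<lambda>p. Tm' (Tm p)) ` X" by (simp add: image_image)
    also have "\<dots> = X" using inv1 XS by (auto simp: image_iff) (metis subsetD)
    finally show ?thesis .
  qed
  have NT: "nontrivial_totally_geodesic pd HRp (Tm ` X)"
    by (rule tr_NTG[OF TS TpS inv1 inv2 iso assms])
  have PH: "Phinv ` Hyp = H2"
  proof
    show "Phinv ` Hyp \<subseteq> H2" using Phinv_Im by (auto simp: H2_def)
    show "H2 \<subseteq> Phinv ` Hyp"
    proof
      fix z assume "z \<in> H2"
      then have "z = Phinv (Phi z)" "Phi z \<in> Hyp" using Phinv_Phi Phi_Hyp by (auto simp: H2_def)
      then show "z \<in> Phinv ` Hyp" by blast
    qed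
  qed
  have imgT': "Tm' ` (A \<times> UNIV) = (Phinv ` A) \<times> UNIV" for A
    by (auto simp: Tm'_def image_iff) 
  have imgT'r: "Tm' ` (A \<times> {r}) = (Phinv ` A) \<times> {r}" for A r
    by (auto simp: Tm'_def image_iff)
  from main_hyp[OF NT] show ?thesis
  proof
    assume "\<exists>r. Tm ` X = Hyp \<times> {r}"
    then obtain r where r: "Tm ` X = Hyp \<times> {r}" by blast
    have "X = Tm' ` (Hyp \<times> {r})" using bk r by simp
    also have "\<dots> = H2 \<times> {r}" using imgT'r PH by simp
    finally show ?thesis by blast
  next
    assume "\<exists>\<gamma>. is_geodesic hD Hyp \<gamma> \<and> Tm ` X = \<gamma> \<times> UNIV"
    then obtain \<gamma> where g: "is_geodesic hD Hyp \<gamma>" "Tm ` X = \<gamma> \<times> UNIV" by blast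
    have "X = Tm' ` (\<gamma> \<times> UNIV)" using bk g(2) by simp
    also have "\<dots> = (Phinv ` \<gamma>) \<times> UNIV" by (rule imgT')
    finally have X: "X = (Phinv ` \<gamma>) \<times> UNIV" .
    have "is_geodesic hdist H2 (Phinv ` \<gamma>)"
    proof (rule tr_geo[OF _ _ g(1)])
      show "Phinv p \<in> H2" if "p \<in> Hyp" for p using Phinv_Im that by (simp add: H2_def)
      show "hdist (Phinv p) (Phinv q) = hD p q" if "p \<in> Hyp" "q \<in> Hyp" for p q
        using hdist_hd[OF Phinv_Im[OF that(1)] Phinv_Im[OF that(2)]] Phi_Phinv that by simp
    qed
    then show ?thesis using X by blast
  qed
qed


end
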